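(* Let $n\ge2$. The set $\mathcal{A}_n$ of arc permutations in $\mathfrak{S}_n$ is cyclic Schur-positive.
   Context: A permutation $\pi\in\mathfrak{S}_n$ (one-line notation) is an arc permutation if for every $1\le j\le n$ the set $\{\pi(1),\dots,\pi(j)\}$ is an interval in $\mathbb{Z}_n$ (i.e., a set of cyclically consecutive residues). For $\pi\in\mathfrak{S}_n$, $\mathrm{Des}(\pi)=\{i\in[n-1]:\pi(i)>\pi(i+1)\}$, $\mathrm{cDes}(\pi)=\{i\in[n]:\pi(i)>\pi(i+1)\}$ with $\pi(n+1):=\pi(1)$. $\mathbf{x}^J=\prod_{i\in J}x_i$; $i+J=\{i+j\bmod n:j\in J\}\subseteq[n]$. Cyclic Schur-positive: for a skew shape $\lambda/\mu$ with $n$ cells, $\mathrm{Des}(T)$ for $T\in\mathrm{SYT}(\lambda/\mu)$ is the set of $i\in[n-1]$ with $i+1$ in a strictly lower row than $i$. A cyclic descent extension on $\mathrm{SYT}(\lambda/\mu)$ is a pair $(\mathrm{cDes},\psi)$, $\psi$ a bijection, with $\mathrm{cDes}(T)\cap[n-1]=\mathrm{Des}(T)$, $\mathrm{cDes}(\psi T)=1+\mathrm{cDes}(T)$, $\emptyset\ne\mathrm{cDes}(T)\ne[n]$; it exists iff $\lambda/\mu$ is not a connected ribbon, and $\sum_T\mathbf{x}^{\mathrm{cDes}(T)}$ is then independent of the choice. $A\subseteq\mathfrak{S}_n$ is cyclic Schur-positive if $\sum_{\pi\in A}\mathbf{x}^{\mathrm{cDes}(\pi)}=\sum m_{\lambda/\mu}\sum_{T\in\mathrm{SYT}(\lambda/\mu)}\mathbf{x}^{\mathrm{cDes}(T)}$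 for some nonnegative integers $m_{\lambda/\mu}$ indexed by skew shapes with $n$ cells that are not connected ribbons. *)

theory Defs
  imports "HOL-Combinatorics.Permutations"
begin

definition cyc_interval :: "nat \<Rightarrow> nat set \<Rightarrow> bool" where
  "cyc_interval n S \<longleftrightarrow> (\<exists>a m. m \<le> n \<and> S = {(a + k) mod n + 1 | k. k < m})"

definition arc_perm :: "nat \<Rightarrow> (nat \<Rightarrow> nat) \<Rightarrow> bool" where
  "arc_perm n \<pi> \<longleftrightarrow> \<pi> permutes {1..n} \<and> (\<forall>j\<in>{1..n}. cyc_interval n (\<pi> ` {1..j}))"

definition arc_perms :: "nat \<Rightarrow> (nat \<Rightarrow> nat) set" where
  "arc_perms n = {\<pi>. arc_perm n \<pi>}"

definition cDes_perm :: "nat \<Rightarrow> (nat \<Rightarrow> nat) \<Rightarrow> nat set" where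
  "cDes_perm n \<pi> = {i \<in> {1..n}. \<pi> i > \<pi> (if i = n then 1 else i + 1)}"

text \<open>Cyclic shift i + J of a subset J of [n] (here with i = 1).\<close>
definition cyc_shift :: "nat \<Rightarrow> nat set \<Rightarrow> nat set" where
  "cyc_shift n J = {(j mod n) + 1 | j. j \<in> J}"

text \<open>Cells are pairs (row, column), 0-indexed, English convention (row index grows downward).
 A Young diagram (of a partition) is a finite down-closed set of cells.\<close>
definition young :: "(nat \<times> nat) set \<Rightarrow> bool" where
  "young Y \<longleftrightarrow> finite Y \<and> (\<forall>i j i' j'. (i, j) \<in> Y \<and> i' \<le> i \<and> j' \<le> j \<longrightarrow> (i', j') \<in> Y)"

definition skew_shape :: "(nat \<times> nat) set \<Rightarrow> (nat \<times> nat) set \<Rightarrow> bool" where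
  "skew_shape L M \<longleftrightarrow> young L \<and> young M \<and> M \<subseteq> L"

definition syt :: "nat \<Rightarrow> (nat \<times> nat) set \<Rightarrow> ((nat \<times> nat) \<Rightarrow> nat) \<Rightarrow> bool" where
  "syt n D T \<longleftrightarrow> bij_betw T D {1..n} \<and> (\<forall>c. c \<notin> D \<longrightarrow> T c = 0)
     \<and> (\<forall>i j. (i, j) \<in> D \<and> (i, Suc j) \<in> D \<longrightarrow> T (i, j) < T (i, Suc j))
     \<and> (\<forall>i j. (i, j) \<in> D \<and> (Suc i, j) \<in> D \<longrightarrow> T (i, j) < T (Suc i, j))"

definition Des_syt :: "nat \<Rightarrow> (nat \<times> nat) set \<Rightarrow> ((nat \<times> nat) \<Rightarrow> nat) \<Rightarrow> nat set" where
  "Des_syt n D T = {i \<in> {1..n-1}. fst (inv_into D T i) < fst (inv_into D T (i + 1))}"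

definition cell_adj :: "nat \<times> nat \<Rightarrow> nat \<times> nat \<Rightarrow> bool" where
  "cell_adj c d \<longleftrightarrow> (fst c = fst d \<and> (snd d = Suc (snd c) \<or> snd c = Suc (snd d)))
                  \<or> (snd c = snd d \<and> (fst d = Suc (fst c) \<or> fst c = Suc (fst d)))"

definition connected_cells :: "(nat \<times> nat) set \<Rightarrow> bool" where
  "connected_cells D \<longleftrightarrow> (\<forall>c\<in>D. \<forall>d\<in>D. (\<lambda>x y. x \<in> D \<and> y \<in> D \<and> cell_adj x y)\<^sup>*\<^sup>* c d)"

definition connected_ribbon :: "(nat \<times> nat) set \<Rightarrow> bool" where
  "connected_ribbon D \<longleftrightarrow> D \<noteq> {} \<and> connected_cells D \<and>
     \<not> (\<exists>i j. (i, j) \<in> D \<and> (i, Suc j) \<in> D \<and> (Suc i, j) \<in> D \<and> (Suc i, Suc j) \<in> D)"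

definition cyc_desc_ext :: "nat \<Rightarrow> (nat \<times> nat) set \<Rightarrow> (((nat \<times> nat) \<Rightarrow> nat) \<Rightarrow> nat set)
      \<Rightarrow> (((nat \<times> nat) \<Rightarrow> nat) \<Rightarrow> ((nat \<times> nat) \<Rightarrow> nat)) \<Rightarrow> bool" where
  "cyc_desc_ext n D cD \<psi> \<longleftrightarrow> bij_betw \<psi> {T. syt n D T} {T. syt n D T} \<and>
     (\<forall>T. syt n D T \<longrightarrow>
        cD T \<subseteq> {1..n} \<and> cD T \<inter> {1..n-1} = Des_syt n D T \<and>
        cD (\<psi> T) = cyc_shift n (cD T) \<and> cD T \<noteq> {} \<and> cD T \<noteq> {1..n})"

text \<open>Equality of the generating functions sum x^cDes is expressed coefficientwise:
 for every J, the number of elements with cyclic descent set J agree. Nonnegative integer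
 multiplicities m_{lambda/mu} are encoded by a finite list of shapes (with repetitions);
 for each shape a cyclic descent extension is chosen (the sum is independent of it).\<close>
definition cyclic_schur_positive :: "nat \<Rightarrow> (nat \<Rightarrow> nat) set \<Rightarrow> bool" where
  "cyclic_schur_positive n A \<longleftrightarrow>
    (\<exists>shapes :: ((nat \<times> nat) set \<times> (nat \<times> nat) set) list.
     \<exists>cds :: nat \<Rightarrow> (((nat \<times> nat) \<Rightarrow> nat) \<Rightarrow> nat set).
       (\<forall>k < length shapes.
          skew_shape (fst (shapes ! k)) (snd (shapes ! k)) \<and>
          card (fst (shapes ! k) - snd (shapes ! k)) = n \<and>
          \<not> connected_ribbon (fst (shapes ! k) - snd (shapes ! k)) \<and>
          (\<exists>\<psi>. cyc_desc_ext n (fst (shapes ! k) - snd (shapes ! k)) (cds k) \<psi>)) \<and>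
       (\<forall>J. card {\<pi> \<in> A. cDes_perm n \<pi> = J} =
            (\<Sum>k < length shapes.
               card {T. syt n (fst (shapes ! k) - snd (shapes ! k)) T \<and> cds k T = J})))"

end

theory Submission
  imports Defs
begin

definition hh :: "nat \<Rightarrow> nat \<Rightarrow> nat \<Rightarrow> nat" where "hh n a t = (a + t) mod n + 1"

lemma img_shift: "(\<lambda>t. c + t) ` {..<m} = {c..<c+(m::nat)}"
  apply (auto simp: image_def)
  apply (rule_tac x="x - c" in bexI)
  by auto

lemma cyc_interval_hh: "cyc_interval n S \<longleftrightarrow> (\<exists>a m. m \<le> n \<and> S = hh n a ` {..<m})"
  unfolding cyc_interval_def hh_def by (auto simp: image_def)

lemma hh_inj: "inj_on (hh n a) {..<n}"
proof
  fix x y assume "x \<in> {..<n}" "y \<in> {..<n}" "hh n a x = hh n a y"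
  then have "(a + x) mod n = (a + y) mod n" by (simp add: hh_def)
  then have "x mod n = y mod n" using nat_mod_eq_iff by auto
  then show "x = y" using \<open>x \<in> _\<close> \<open>y \<in> _\<close> by simp
qed

lemma hh_bij: "n \<ge> 1 \<Longrightarrow> bij_betw (hh n a) {..<n} {1..n}"
proof -
  assume n: "n \<ge> 1"
  have sub: "hh n a ` {..<n} \<subseteq> {1..n}" using n by (auto simp: hh_def less_Suc_eq_le[symmetric])
  have "card (hh n a ` {..<n}) = n" using hh_inj card_image by fastforce
  then have "hh n a ` {..<n} = {1..n}" using sub by (simp add: card_subset_eq)
  then show ?thesis using hh_inj by (simp add: bij_betw_def)
qed

lemma CI_compl:
  assumes n: "n \<ge> 1" and S: "cyc_interval n S"
  shows "cyc_interval n ({1..n} - S)"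
proof -
  obtain a m where m: "m \<le> n" and Sd: "S = hh n a ` {..<m}" using S cyc_interval_hh by blast
  have "{1..n} - S = hh n a ` {..<n} - hh n a ` {..<m}"
    using hh_bij[OF n, of a] Sd by (simp add: bij_betw_def)
  also have "\<dots> = hh n a ` ({..<n} - {..<m})"
    using hh_inj[of n a] m by (intro inj_on_image_set_diff[symmetric]) auto
  also have "{..<n} - {..<m} = (\<lambda>k. m + k) ` {..<n-m}"
  proof
    show "{..<n} - {..<m} \<subseteq> (\<lambda>k. m + k) ` {..<n-m}"
    proof
      fix x assume "x \<in> {..<n} - {..<m}"
      then have "x = m + (x - m)" "x - m \<in> {..<n-m}" by auto
      then show "x \<in> (\<lambda>k. m + k) ` {..<n-m}" by (metis image_eqI)
    qed
    show "(\<lambda>k. m + k) ` {..<n-m} \<subseteq> {..<n} - {..<m}" by auto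
  qed
  also have "hh n a ` ((\<lambda>k. m + k) ` {..<n-m}) = hh n (a+m) ` {..<n-m}"
    by (auto simp: image_image hh_def add.assoc)
  finally show ?thesis unfolding cyc_interval_hh by (metis diff_le_self)
qed

lemma CI_int:
  assumes n: "n \<ge> 1" and S: "cyc_interval n S" and nS: "n \<notin> S"
  shows "\<exists>l. S = {l..<l + card S} \<and> 1 \<le> l \<and> l + card S \<le> n"
proof -
  obtain a m where m: "m \<le> n" and Sd: "S = hh n a ` {..<m}" using S cyc_interval_hh by blast
  define a' where "a' = a mod n"
  have a'n: "a' < n" using n by (simp add: a'_def)
  have hha: "hh n a t = (a' + t) mod n + 1" for t by (simp add: hh_def a'_def mod_add_left_eq)
  show ?thesis
  proof (cases "m = 0")
    case True then show ?thesis using Sd n by auto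
  next
    case False
    have lt: "a' + m < n"
    proof (rule ccontr)
      assume "\<not> a' + m < n"
      then have k: "n - 1 - a' < m" using False by arith
      have "hh n a (n - 1 - a') = n" using a'n n by (simp add: hha)
      then have "n \<in> S" using Sd k by (metis image_eqI lessThan_iff)
      then show False using nS by simp
    qed
    have "S = (\<lambda>t. a' + 1 + t) ` {..<m}" unfolding Sd using lt by (auto simp: hha)
    also have "\<dots> = {a'+1..<a'+1+m}" by (rule img_shift)
    finally have S2: "S = {a'+1..<a'+1+m}" .
    then have "card S = m" by simp
    then show ?thesis using S2 lt by (intro exI[of _ "a'+1"]) auto
  qed
qed

lemma int_is_CI:
  assumes "1 \<le> l" "l + m \<le> n + 1"
  shows "cyc_interval n {l..<l+m}"
proof -
  have "hh n (l - 1) t = l + t" if "t < m" for t using assms that by (simp add: hh_def)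
  then have "hh n (l-1) ` {..<m} = (\<lambda>t. l + t) ` {..<m}" by auto
  also have "\<dots> = {l..<l+m}" by (rule img_shift)
  finally show ?thesis unfolding cyc_interval_hh using assms by (metis add_le_cancel_right le_add_diff_inverse2 le_trans add.commute)
qed

lemma CI_nbr:
  assumes n: "n \<ge> 2" and T: "cyc_interval n T" and nT: "n \<in> T" and c: "card T \<ge> 2"
  shows "1 \<in> T \<or> n - 1 \<in> T"
proof -
  obtain a m where m: "m \<le> n" and Td: "T = hh n a ` {..<m}" using T cyc_interval_hh by blast
  have "card T \<le> m" using Td card_image_le by fastforce
  then have m2: "m \<ge> 2" using c by simp
  obtain k0 where k0: "k0 < m" "hh n a k0 = n" using nT Td by auto
  then have e: "(a + k0) mod n = n - 1" by (simp add: hh_def)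
  show ?thesis
  proof (cases "Suc k0 < m")
    case True
    have "(a + Suc k0) mod n = 0" using e n by (simp add: mod_Suc)
    then have "hh n a (Suc k0) = 1" by (simp add: hh_def)
    then show ?thesis using True Td by (metis image_eqI lessThan_iff)
  next
    case False
    then have k1: "k0 - 1 < m" "k0 \<ge> 1" using k0 m2 by auto
    have "Suc (a + (k0 - 1)) = a + k0" using k1 by simp
    then have "Suc (a + (k0 - 1)) mod n = n - 1" using e by simp
    then have "(a + (k0 - 1)) mod n = n - 2" using n by (simp add: mod_Suc split: if_splits)
    then have "hh n a (k0 - 1) = n - 1" using n by (simp add: hh_def)
    then show ?thesis using k1 Td by (metis image_eqI lessThan_iff)
  qed
qed

definition pint :: "(nat \<Rightarrow> nat) \<Rightarrow> nat \<Rightarrow> bool" where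
  "pint f m \<longleftrightarrow> (\<forall>j\<in>{1..m}. \<exists>l. f ` {1..j} = {l..<l+j})"

lemma pint_mono: "pint f (Suc m) \<Longrightarrow> pint f m"
  unfolding pint_def by auto

lemma pint_inj: "pint f m \<Longrightarrow> inj_on f {1..m}"
proof -
  assume "pint f m"
  show ?thesis
  proof (cases "m = 0")
    case True then show ?thesis by simp
  next
    case False
    then have "m \<in> {1..m}" by auto
    then obtain l where "f ` {1..m} = {l..<l+m}" using \<open>pint f m\<close> unfolding pint_def by blast
    then have "card (f ` {1..m}) = card {1..m}" by simp
    then show ?thesis by (simp add: inj_on_iff_eq_card)
  qed
qed

lemma endpt:
  assumes "insert x {l'..<l'+m} = {L..<L+Suc m}" "x \<notin> {l'..<l'+m}" "m \<ge> 1"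
  shows "x = L \<or> x = L + m"
proof (rule ccontr)
  assume c: "\<not> (x = L \<or> x = L + m)"
  have "L \<in> {L..<L+Suc m}" "L + m \<in> {L..<L+Suc m}" by auto
  then have "L \<in> {l'..<l'+m}" "L + m \<in> {l'..<l'+m}" using assms(1) c by (metis insert_iff)+
  then show False by auto
qed

lemma PI_unique:
  "pint f m \<Longrightarrow> pint g m \<Longrightarrow> f ` {1..m} = g ` {1..m} \<Longrightarrow>
   (\<forall>i. 1 \<le> i \<longrightarrow> i < m \<longrightarrow> (f (Suc i) < f i \<longleftrightarrow> g (Suc i) < g i)) \<Longrightarrow>
   i \<in> {1..m} \<Longrightarrow> f i = g i"
proof (induction m arbitrary: i)
  case 0 then show ?case by simp
next
  case (Suc m)
  have fm: "pint f m" and gm: "pint g m" using Suc.prems pint_mono by blast+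
  have injf: "inj_on f {1..Suc m}" and injg: "inj_on g {1..Suc m}" using Suc.prems pint_inj by blast+
  have key: "f (Suc m) = g (Suc m)"
  proof (cases "m = 0")
    case True then show ?thesis using Suc.prems(3) by simp
  next
    case False
    have "Suc m \<in> {1..Suc m}" "m \<in> {1..m}" using False by auto
    then obtain L where L: "f ` {1..Suc m} = {L..<L+Suc m}" using Suc.prems(1) unfolding pint_def by blast
    have Lg: "g ` {1..Suc m} = {L..<L+Suc m}" using L Suc.prems(3) by simp
    obtain lf where lf: "f ` {1..m} = {lf..<lf+m}" using fm \<open>m \<in> {1..m}\<close> unfolding pint_def by blast
    obtain lg where lg: "g ` {1..m} = {lg..<lg+m}" using gm \<open>m \<in> {1..m}\<close> unfolding pint_def by blast
    have sp: "{1..Suc m} = insert (Suc m) {1..m}" by auto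
    have fx: "f (Suc m) \<notin> f ` {1..m}" using inj_on_image_mem_iff[OF injf, of "Suc m" "{1..m}"] by auto
    have gx: "g (Suc m) \<notin> g ` {1..m}" using inj_on_image_mem_iff[OF injg, of "Suc m" "{1..m}"] by auto
    have "insert (f (Suc m)) {lf..<lf+m} = {L..<L+Suc m}" using L lf sp by (metis image_insert)
    then have ef: "f (Suc m) = L \<or> f (Suc m) = L + m"
      using endpt[of "f (Suc m)" lf m L] lf fx False by simp
    have "insert (g (Suc m)) {lg..<lg+m} = {L..<L+Suc m}" using Lg lg sp by (metis image_insert)
    then have eg: "g (Suc m) = L \<or> g (Suc m) = L + m"
      using endpt[of "g (Suc m)" lg m L] lg gx False by simp
    have fmm: "f m \<in> f ` {1..m}" "g m \<in> g ` {1..m}" using False by auto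
    have sub: "f ` {1..m} \<subseteq> f ` {1..Suc m}" "g ` {1..m} \<subseteq> g ` {1..Suc m}" by auto
    have fmI: "f m \<in> {L..<L+Suc m}" "f m \<noteq> f (Suc m)"
      using L fmm(1) sub(1) apply (metis subsetD)
      using fmm(1) fx by metis
    have gmI: "g m \<in> {L..<L+Suc m}" "g m \<noteq> g (Suc m)"
      using Lg fmm(2) sub(2) apply (metis subsetD)
      using fmm(2) gx by metis
    have d: "f (Suc m) < f m \<longleftrightarrow> g (Suc m) < g m" using Suc.prems(4) False by auto
    show ?thesis using ef eg fmI gmI d by auto
  qed
  have sp: "{1..Suc m} = insert (Suc m) {1..m}" by auto
  have fx: "f (Suc m) \<notin> f ` {1..m}" using inj_on_image_mem_iff[OF injf, of "Suc m" "{1..m}"] by auto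
  have gx: "g (Suc m) \<notin> g ` {1..m}" using inj_on_image_mem_iff[OF injg, of "Suc m" "{1..m}"] by auto
  have "f ` {1..m} = f ` {1..Suc m} - {f (Suc m)}" using sp fx by auto
  also have "\<dots> = g ` {1..Suc m} - {g (Suc m)}" using Suc.prems(3) key by simp
  also have "\<dots> = g ` {1..m}" using sp gx by auto
  finally have im: "f ` {1..m} = g ` {1..m}" .
  show ?case
  proof (cases "i = Suc m")
    case True then show ?thesis using key by simp
  next
    case False
    then have "i \<in> {1..m}" using Suc.prems(5) by auto
    then show ?thesis using Suc.IH[OF fm gm im] Suc.prems(4) by auto
  qed
qed

lemma PI_exists:
  "\<exists>f. pint f m \<and> f ` {1..m} = {L..<L+m} \<and> (\<forall>i. 1 \<le> i \<longrightarrow> i < m \<longrightarrow> (f (Suc i) < f i \<longleftrightarrow> i \<in> S))"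
proof (induction m arbitrary: L)
  case 0 then show ?case by (auto simp: pint_def)
next
  case (Suc m)
  have sp: "{1..Suc m} = insert (Suc m) {1..m}" by auto
  show ?case
  proof (cases "m \<in> S")
    case True
    obtain g where g: "pint g m" "g ` {1..m} = {Suc L..<Suc L+m}"
      "\<forall>i. 1 \<le> i \<longrightarrow> i < m \<longrightarrow> (g (Suc i) < g i \<longleftrightarrow> i \<in> S)" using Suc.IH by blast
    define f where "f = g(Suc m := L)"
    have fj: "f ` {1..j} = g ` {1..j}" if "j \<le> m" for j using that by (auto simp: f_def)
    have im: "f ` {1..Suc m} = {L..<L+Suc m}"
    proof -
      have "f ` {1..Suc m} = insert (f (Suc m)) (f ` {1..m})" using sp by simp
      also have "\<dots> = insert L {Suc L..<Suc L+m}" using fj[of m] g(2) by (simp add: f_def)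
      also have "\<dots> = {L..<L+Suc m}" by auto
      finally show ?thesis .
    qed
    have "pint f (Suc m)" unfolding pint_def
    proof
      fix j assume j: "j \<in> {1..Suc m}"
      show "\<exists>l. f ` {1..j} = {l..<l+j}"
      proof (cases "j = Suc m")
        case True then show ?thesis using im by auto
      next
        case False then show ?thesis using fj[of j] g(1) j unfolding pint_def by auto
      qed
    qed
    moreover have "\<forall>i. 1 \<le> i \<longrightarrow> i < Suc m \<longrightarrow> (f (Suc i) < f i \<longleftrightarrow> i \<in> S)"
    proof (intro allI impI)
      fix i assume i: "1 \<le> i" "i < Suc m"
      show "f (Suc i) < f i \<longleftrightarrow> i \<in> S"
      proof (cases "i = m")
        case True
        have "g m \<in> {Suc L..<Suc L+m}" using g(2) i True by auto
        then show ?thesis using True \<open>m \<in> S\<close> by (auto simp: f_def)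
      next
        case False then show ?thesis using g(3) i by (auto simp: f_def)
      qed
    qed
    ultimately show ?thesis using im by blast
  next
    case False
    obtain g where g: "pint g m" "g ` {1..m} = {L..<L+m}"
      "\<forall>i. 1 \<le> i \<longrightarrow> i < m \<longrightarrow> (g (Suc i) < g i \<longleftrightarrow> i \<in> S)" using Suc.IH by blast
    define f where "f = g(Suc m := L + m)"
    have fj: "f ` {1..j} = g ` {1..j}" if "j \<le> m" for j using that by (auto simp: f_def)
    have im: "f ` {1..Suc m} = {L..<L+Suc m}"
    proof -
      have "f ` {1..Suc m} = insert (f (Suc m)) (f ` {1..m})" using sp by simp
      also have "\<dots> = insert (L+m) {L..<L+m}" using fj[of m] g(2) by (simp add: f_def)
      also have "\<dots> = {L..<L+Suc m}" by auto
      finally show ?thesis .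
    qed
    have "pint f (Suc m)" unfolding pint_def
    proof
      fix j assume j: "j \<in> {1..Suc m}"
      show "\<exists>l. f ` {1..j} = {l..<l+j}"
      proof (cases "j = Suc m")
        case True then show ?thesis using im by auto
      next
        case False then show ?thesis using fj[of j] g(1) j unfolding pint_def by auto
      qed
    qed
    moreover have "\<forall>i. 1 \<le> i \<longrightarrow> i < Suc m \<longrightarrow> (f (Suc i) < f i \<longleftrightarrow> i \<in> S)"
    proof (intro allI impI)
      fix i assume i: "1 \<le> i" "i < Suc m"
      show "f (Suc i) < f i \<longleftrightarrow> i \<in> S"
      proof (cases "i = m")
        case True
        have "g m \<in> {L..<L+m}" using g(2) i True by auto
        then show ?thesis using True \<open>m \<notin> S\<close> by (auto simp: f_def)
      next
        case False then show ?thesis using g(3) i by (auto simp: f_def)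
      qed
    qed
    ultimately show ?thesis using im by blast
  qed
qed

lemma perm_facts:
  fixes n :: nat
  assumes "\<pi> permutes {1..n}"
  shows "bij_betw \<pi> {1..n} {1..n}" "inj_on \<pi> {1..n}" "\<pi> ` {1..n} = {1..n}"
    "\<And>x. x \<in> {1..n} \<Longrightarrow> \<pi> x \<in> {1..n}" "\<And>x. x \<notin> {1..n} \<Longrightarrow> \<pi> x = x"
proof -
  show b: "bij_betw \<pi> {1..n} {1..n}" by (rule permutes_imp_bij[OF assms])
  show "inj_on \<pi> {1..n}" using b by (rule bij_betw_imp_inj_on)
  show "\<pi> ` {1..n} = {1..n}" using b by (rule bij_betw_imp_surj_on)
  show "\<And>x. x \<in> {1..n} \<Longrightarrow> \<pi> x \<in> {1..n}" using permutes_in_image[OF assms] by blast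
  show "\<And>x. x \<notin> {1..n} \<Longrightarrow> \<pi> x = x" using permutes_not_in[OF assms] by blast
qed

lemma cdes_lt: "i \<in> {1..<n} \<Longrightarrow> i \<in> cDes_perm n \<pi> \<longleftrightarrow> \<pi> (Suc i) < \<pi> i"
  unfolding cDes_perm_def by auto

lemma cdes_n: "n \<ge> 1 \<Longrightarrow> n \<in> cDes_perm n \<pi> \<longleftrightarrow> \<pi> 1 < \<pi> n"
  unfolding cDes_perm_def by auto

lemma rev_img: "j \<le> n \<Longrightarrow> (\<lambda>i. f (n+1-i)) ` {1..j} = f ` {n+1-j..(n::nat)}"
proof
  assume j: "j \<le> n"
  show "(\<lambda>i. f (n+1-i)) ` {1..j} \<subseteq> f ` {n+1-j..n}" using j by (auto intro!: imageI)
  show "f ` {n+1-j..n} \<subseteq> (\<lambda>i. f (n+1-i)) ` {1..j}"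
  proof
    fix y assume "y \<in> f ` {n+1-j..n}"
    then obtain k where k: "k \<in> {n+1-j..n}" "y = f k" by auto
    then have "n+1-k \<in> {1..j}" "n+1-(n+1-k) = k" using j by auto
    then show "y \<in> (\<lambda>i. f (n+1-i)) ` {1..j}" using k by (metis image_eqI)
  qed
qed

lemma arc_S1:
  assumes n: "n \<ge> 2" and arc: "arc_perm n \<pi>" and p: "p \<in> {1..n}" "\<pi> p = n" and j: "1 \<le> j" "j < p"
  shows "\<exists>l. \<pi> ` {1..j} = {l..<l+j} \<and> 1 \<le> l \<and> l + j \<le> n"
proof -
  have perm: "\<pi> permutes {1..n}" using arc unfolding arc_perm_def by blast
  note pf = perm_facts[OF perm]
  have "j \<in> {1..n}" using j p(1) by auto
  then have cyc: "cyc_interval n (\<pi> ` {1..j})" using arc unfolding arc_perm_def by blast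
  have nn: "n \<notin> \<pi> ` {1..j}"
  proof
    assume "n \<in> \<pi> ` {1..j}"
    then obtain x where x: "x \<in> {1..j}" "\<pi> x = n" by blast
    have xn: "x \<in> {1..n}" using x(1) j p(1) by auto
    have "\<pi> x = \<pi> p" using x(2) p(2) by simp
    then have "x = p" by (rule inj_onD[OF pf(2) _ xn p(1)])
    then show False using x(1) j by auto
  qed
  have "inj_on \<pi> {1..j}" using j p(1) by (intro inj_on_subset[OF pf(2)]) auto
  then have c: "card (\<pi> ` {1..j}) = j" by (simp add: card_image)
  show ?thesis using CI_int[of n "\<pi> ` {1..j}"] cyc nn n c by auto
qed

lemma arc_S2:
  assumes n: "n \<ge> 2" and arc: "arc_perm n \<pi>" and p: "p \<in> {1..n}" "\<pi> p = n" and j: "p < j" "j \<le> n"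
  shows "\<exists>l. \<pi> ` {j..n} = {l..<l+(n+1-j)} \<and> 1 \<le> l \<and> l + (n+1-j) \<le> n"
proof -
  have perm: "\<pi> permutes {1..n}" using arc unfolding arc_perm_def by blast
  note pf = perm_facts[OF perm]
  have d: "{j..n} = {1..n} - {1..j-1}" using j p(1) by auto
  have "\<pi> ` {j..n} = \<pi> ` {1..n} - \<pi> ` {1..j-1}"
    unfolding d by (rule inj_on_image_set_diff[OF pf(2)]) (use j in auto)
  then have e: "\<pi> ` {j..n} = {1..n} - \<pi> ` {1..j-1}" using pf(3) by simp
  have "j - 1 \<in> {1..n}" using j p(1) by auto
  then have "cyc_interval n (\<pi> ` {1..j-1})" using arc unfolding arc_perm_def by blast
  then have cyc: "cyc_interval n (\<pi> ` {j..n})" using e CI_compl n by auto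
  have nn: "n \<notin> \<pi> ` {j..n}"
  proof -
    have "p \<in> {1..j-1}" using p(1) j by auto
    then have "n \<in> \<pi> ` {1..j-1}" using p(2) by (metis image_eqI)
    then show ?thesis using e by auto
  qed
  have "inj_on \<pi> {j..n}" using j p(1) by (intro inj_on_subset[OF pf(2)]) auto
  then have c: "card (\<pi> ` {j..n}) = n + 1 - j" by (simp add: card_image)
  show ?thesis using CI_int[of n "\<pi> ` {j..n}"] cyc nn n c by auto
qed

lemma arc_S3:
  assumes n: "n \<ge> 2" and arc: "arc_perm n \<pi>" and p: "p \<in> {2..n}" "\<pi> p = n"
  shows "\<pi> ` {1..p-1} = {1..<p} \<or> \<pi> ` {1..p-1} = {n+1-p..<n}"
proof -
  have perm: "\<pi> permutes {1..n}" using arc unfolding arc_perm_def by blast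
  note pf = perm_facts[OF perm]
  have p1: "p \<in> {1..n}" "1 \<le> p - 1" "p - 1 < p" using p by auto
  obtain l where l: "\<pi> ` {1..p-1} = {l..<l+(p-1)}" "1 \<le> l" "l + (p-1) \<le> n"
    using arc_S1[OF n arc p1(1) p(2) p1(2,3)] by blast
  have sp: "{1..p} = insert p {1..p-1}" using p(1) by auto
  have T: "\<pi> ` {1..p} = insert n (\<pi> ` {1..p-1})" using sp p(2) by simp
  have cyc: "cyc_interval n (\<pi> ` {1..p})" using arc p1(1) unfolding arc_perm_def by blast
  have "inj_on \<pi> {1..p}" using p(1) by (intro inj_on_subset[OF pf(2)]) auto
  then have c: "card (\<pi> ` {1..p}) = p" by (simp add: card_image)
  have nT: "n \<in> \<pi> ` {1..p}" unfolding T by simp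
  have c2: "card (\<pi> ` {1..p}) \<ge> 2" using c p(1) by simp
  have h: "1 \<in> \<pi> ` {1..p} \<or> n - 1 \<in> \<pi> ` {1..p}" by (rule CI_nbr[OF n cyc nT c2])
  have "1 \<noteq> n" "n - 1 \<noteq> n" using n by auto
  then have "1 \<in> {l..<l+(p-1)} \<or> n - 1 \<in> {l..<l+(p-1)}" using h unfolding T l(1) by simp
  then have "l = 1 \<or> l = n + 1 - p" using l(2,3) by auto
  then show ?thesis using l(1) p(1) by auto
qed

lemma arc_typeA:
  fixes n :: nat
  assumes perm: "\<pi> permutes {1..n}" and n: "n \<ge> 2" and p: "p \<in> {2..<n}" "\<pi> p = n"
    and A: "\<pi> ` {1..p-1} = {1..<p}"
  shows "n \<in> cDes_perm n \<pi>"
proof -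
  note pf = perm_facts[OF perm]
  have "\<pi> 1 \<in> \<pi> ` {1..p-1}" using p(1) by auto
  then have l1: "\<pi> 1 < p" using A by auto
  have nn: "n \<in> {1..n}" "p \<in> {1..n}" using n p(1) by auto
  have "\<pi> n \<noteq> \<pi> p" using inj_onD[OF pf(2) _ nn] p(1) by auto
  then have a: "\<pi> n \<noteq> n" using p(2) by simp
  have sub: "{1..p-1} \<subseteq> {1..n}" using p(1) by auto
  have "\<pi> n \<in> \<pi> ` {1..p-1} \<longleftrightarrow> n \<in> {1..p-1}" by (rule inj_on_image_mem_iff[OF pf(2) nn(1) sub])
  then have "\<pi> n \<notin> \<pi> ` {1..p-1}" using p(1) by auto
  then have b: "\<pi> n \<notin> {1..<p}" using A by simp
  have "\<pi> n \<in> {1..n}" using pf(4) nn(1) by blast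
  then have "p \<le> \<pi> n" using b by auto
  then show ?thesis using cdes_n[of n \<pi>] n l1 by auto
qed

lemma arc_typeB:
  fixes n :: nat
  assumes perm: "\<pi> permutes {1..n}" and n: "n \<ge> 2" and p: "p \<in> {2..<n}" "\<pi> p = n"
    and A: "\<pi> ` {1..p-1} = {n+1-p..<n}"
  shows "n \<notin> cDes_perm n \<pi>"
proof -
  note pf = perm_facts[OF perm]
  have "\<pi> 1 \<in> \<pi> ` {1..p-1}" using p(1) by auto
  then have l1: "n + 1 - p \<le> \<pi> 1" using A by auto
  have nn: "n \<in> {1..n}" "p \<in> {1..n}" using n p(1) by auto
  have "\<pi> n \<noteq> \<pi> p" using inj_onD[OF pf(2) _ nn] p(1) by auto
  then have a: "\<pi> n \<noteq> n" using p(2) by simp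
  have sub: "{1..p-1} \<subseteq> {1..n}" using p(1) by auto
  have "\<pi> n \<in> \<pi> ` {1..p-1} \<longleftrightarrow> n \<in> {1..p-1}" by (rule inj_on_image_mem_iff[OF pf(2) nn(1) sub])
  then have "\<pi> n \<notin> \<pi> ` {1..p-1}" using p(1) by auto
  then have b: "\<pi> n \<notin> {n+1-p..<n}" using A by simp
  have "\<pi> n \<in> {1..n}" using pf(4) nn(1) by blast
  then have "\<pi> n < n + 1 - p" using a b by auto
  then show ?thesis using cdes_n[of n \<pi>] n l1 by auto
qed

lemma suffix_img:
  fixes n :: nat
  assumes perm: "\<pi> permutes {1..n}" and p: "p \<in> {1..n}" "\<pi> p = n"
  shows "\<pi> ` {p+1..n} = {1..n} - insert n (\<pi> ` {1..p-1})"
proof -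
  note pf = perm_facts[OF perm]
  have d: "{p+1..n} = {1..n} - {1..p}" using p(1) by auto
  have "\<pi> ` {p+1..n} = \<pi> ` {1..n} - \<pi> ` {1..p}"
    unfolding d by (rule inj_on_image_set_diff[OF pf(2)]) (use p(1) in auto)
  moreover have "{1..p} = insert p {1..p-1}" using p(1) by auto
  ultimately show ?thesis using pf(3) p(2) by simp
qed

lemma arc_pint_pre:
  assumes n: "n \<ge> 2" and arc: "arc_perm n \<pi>" and p: "p \<in> {1..n}" "\<pi> p = n"
  shows "pint \<pi> (p - 1)"
  unfolding pint_def
proof
  fix j assume "j \<in> {1..p-1}"
  then have "1 \<le> j" "j < p" by auto
  then show "\<exists>l. \<pi> ` {1..j} = {l..<l+j}" using arc_S1[OF n arc p] by blast
qed

lemma arc_pint_suf: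
  assumes n: "n \<ge> 2" and arc: "arc_perm n \<pi>" and p: "p \<in> {1..n}" "\<pi> p = n"
  shows "pint (\<lambda>i. \<pi> (n+1-i)) (n - p)"
  unfolding pint_def
proof
  fix j assume j: "j \<in> {1..n-p}"
  then have e: "(\<lambda>i. \<pi> (n+1-i)) ` {1..j} = \<pi> ` {n+1-j..n}" by (intro rev_img) auto
  have "p < n + 1 - j" "n + 1 - j \<le> n" using j by auto
  then obtain l where "\<pi> ` {n+1-j..n} = {l..<l+(n+1-(n+1-j))}" using arc_S2[OF n arc p] by blast
  moreover have "n+1-(n+1-j) = j" using j p by auto
  ultimately show "\<exists>l. (\<lambda>i. \<pi> (n+1-i)) ` {1..j} = {l..<l+j}" using e by auto
qed

lemma arc_unique:
  assumes n: "n \<ge> 2" and a1: "arc_perm n \<pi>1" and a2: "arc_perm n \<pi>2" and p: "p \<in> {1..n}"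
    and e1: "\<pi>1 p = n" and e2: "\<pi>2 p = n" and cd: "cDes_perm n \<pi>1 = cDes_perm n \<pi>2"
  shows "\<pi>1 = \<pi>2"
proof -
  have perm1: "\<pi>1 permutes {1..n}" using a1 unfolding arc_perm_def by blast
  have perm2: "\<pi>2 permutes {1..n}" using a2 unfolding arc_perm_def by blast
  have U1: "\<pi>1 ` {1..p-1} = \<pi>2 ` {1..p-1}"
  proof (cases "p = 1")
    case True then show ?thesis by simp
  next
    case False
    then have p2: "p \<in> {2..n}" using p by auto
    have o1: "\<pi>1 ` {1..p-1} = {1..<p} \<or> \<pi>1 ` {1..p-1} = {n+1-p..<n}" by (rule arc_S3[OF n a1 p2 e1])
    have o2: "\<pi>2 ` {1..p-1} = {1..<p} \<or> \<pi>2 ` {1..p-1} = {n+1-p..<n}" by (rule arc_S3[OF n a2 p2 e2])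
    show ?thesis
    proof (cases "p = n")
      case True then have eq: "{n+1-p..<n} = {1..<p}" by simp
      show ?thesis using o1 o2 unfolding eq by metis
    next
      case False
      then have p3: "p \<in> {2..<n}" using p2 by auto
      have ne: "{1..<p} \<noteq> {n+1-p..<n}"
      proof
        assume "{1..<p} = {n+1-p..<n}"
        moreover have "1 \<in> {1..<p}" using p3 by auto
        moreover have "1 \<notin> {n+1-p..<n}" using p3 by auto
        ultimately show False by simp
      qed
      show ?thesis
      proof (rule ccontr)
        assume "\<pi>1 ` {1..p-1} \<noteq> \<pi>2 ` {1..p-1}"
        then have "(\<pi>1 ` {1..p-1} = {1..<p} \<and> \<pi>2 ` {1..p-1} = {n+1-p..<n}) \<or>
                   (\<pi>2 ` {1..p-1} = {1..<p} \<and> \<pi>1 ` {1..p-1} = {n+1-p..<n})" using o1 o2 by metis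
        then show False
        proof (elim disjE conjE)
          assume h1: "\<pi>1 ` {1..p-1} = {1..<p}" and h2: "\<pi>2 ` {1..p-1} = {n+1-p..<n}"
          have "n \<in> cDes_perm n \<pi>1" by (rule arc_typeA[OF perm1 n p3 e1 h1])
          moreover have "n \<notin> cDes_perm n \<pi>2" by (rule arc_typeB[OF perm2 n p3 e2 h2])
          ultimately show False using cd by simp
        next
          assume h1: "\<pi>2 ` {1..p-1} = {1..<p}" and h2: "\<pi>1 ` {1..p-1} = {n+1-p..<n}"
          have "n \<in> cDes_perm n \<pi>2" by (rule arc_typeA[OF perm2 n p3 e2 h1])
          moreover have "n \<notin> cDes_perm n \<pi>1" by (rule arc_typeB[OF perm1 n p3 e1 h2])
          ultimately show False using cd by simp
        qed
      qed
    qed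
  qed
  have U2: "\<pi>1 i = \<pi>2 i" if i: "i \<in> {1..p-1}" for i
  proof (rule PI_unique[OF arc_pint_pre[OF n a1 p e1] arc_pint_pre[OF n a2 p e2] U1 _ i])
    show "\<forall>i. 1 \<le> i \<longrightarrow> i < p - 1 \<longrightarrow> (\<pi>1 (Suc i) < \<pi>1 i \<longleftrightarrow> \<pi>2 (Suc i) < \<pi>2 i)"
    proof (intro allI impI)
      fix i assume "1 \<le> i" "i < p - 1"
      then have "i \<in> {1..<n}" using p by auto
      then show "\<pi>1 (Suc i) < \<pi>1 i \<longleftrightarrow> \<pi>2 (Suc i) < \<pi>2 i" using cdes_lt[of i n] cd by metis
    qed
  qed
  have im: "(\<lambda>i. \<pi>1 (n+1-i)) ` {1..n-p} = (\<lambda>i. \<pi>2 (n+1-i)) ` {1..n-p}"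
  proof -
    have q: "n + 1 - (n - p) = p + 1" using p by auto
    have "(\<lambda>i. \<pi>1 (n+1-i)) ` {1..n-p} = \<pi>1 ` {p+1..n}" using rev_img[of "n-p" n \<pi>1] q by simp
    also have "\<dots> = {1..n} - insert n (\<pi>1 ` {1..p-1})" by (rule suffix_img[OF perm1 p e1])
    also have "\<dots> = {1..n} - insert n (\<pi>2 ` {1..p-1})" using U1 by simp
    also have "\<dots> = \<pi>2 ` {p+1..n}" by (rule suffix_img[OF perm2 p e2, symmetric])
    also have "\<dots> = (\<lambda>i. \<pi>2 (n+1-i)) ` {1..n-p}" using rev_img[of "n-p" n \<pi>2] q by simp
    finally show ?thesis .
  qed
  have U3: "(\<lambda>i. \<pi>1 (n+1-i)) i = (\<lambda>i. \<pi>2 (n+1-i)) i" if i: "i \<in> {1..n-p}" for i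
  proof (rule PI_unique[OF arc_pint_suf[OF n a1 p e1] arc_pint_suf[OF n a2 p e2] im _ i])
    show "\<forall>i. 1 \<le> i \<longrightarrow> i < n - p \<longrightarrow> ((\<lambda>i. \<pi>1 (n+1-i)) (Suc i) < (\<lambda>i. \<pi>1 (n+1-i)) i \<longleftrightarrow>
            (\<lambda>i. \<pi>2 (n+1-i)) (Suc i) < (\<lambda>i. \<pi>2 (n+1-i)) i)"
    proof (intro allI impI)
      fix i assume i: "1 \<le> i" "i < n - p"
      define k where "k = n - i"
      have k: "k \<in> {1..<n}" "n + 1 - Suc i = k" "n + 1 - i = Suc k" "k \<in> {1..n}" "Suc k \<in> {1..n}"
        using i p by (auto simp: k_def)
      have ne1: "\<pi>1 k \<noteq> \<pi>1 (Suc k)" using inj_onD[OF perm_facts(2)[OF perm1] _ k(4) k(5)] by auto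
      have ne2: "\<pi>2 k \<noteq> \<pi>2 (Suc k)" using inj_onD[OF perm_facts(2)[OF perm2] _ k(4) k(5)] by auto
      have "(\<pi>1 k < \<pi>1 (Suc k)) \<longleftrightarrow> k \<notin> cDes_perm n \<pi>1" using cdes_lt[OF k(1), of \<pi>1] ne1 by auto
      moreover have "(\<pi>2 k < \<pi>2 (Suc k)) \<longleftrightarrow> k \<notin> cDes_perm n \<pi>2" using cdes_lt[OF k(1), of \<pi>2] ne2 by auto
      ultimately show "(\<lambda>i. \<pi>1 (n+1-i)) (Suc i) < (\<lambda>i. \<pi>1 (n+1-i)) i \<longleftrightarrow>
            (\<lambda>i. \<pi>2 (n+1-i)) (Suc i) < (\<lambda>i. \<pi>2 (n+1-i)) i" using k(2,3) cd by simp
    qed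
  qed
  show ?thesis
  proof
    fix x
    consider "x \<in> {1..p-1}" | "x = p" | "x \<in> {p+1..n}" | "x \<notin> {1..n}" using p by force
    then show "\<pi>1 x = \<pi>2 x"
    proof cases
      case 1 then show ?thesis using U2 by blast
    next
      case 2 then show ?thesis using e1 e2 by simp
    next
      case 3
      then have "n + 1 - x \<in> {1..n-p}" "n + 1 - (n + 1 - x) = x" by auto
      then show ?thesis using U3[of "n+1-x"] by simp
    next
      case 4 then show ?thesis using perm_facts(5)[OF perm1] perm_facts(5)[OF perm2] by simp
    qed
  qed
qed

definition prv :: "nat \<Rightarrow> nat \<Rightarrow> nat" where "prv n p = (if p = 1 then n else p - 1)"

lemma pint_sub_int:
  fixes n :: nat
  assumes "pint f m" "f ` {1..m} \<subseteq> {1..<n}" "t \<le> m" "n \<ge> 1"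
  shows "cyc_interval n (f ` {1..t})"
proof (cases "t = 0")
  case True
  then have "f ` {1..t} = {1..<1+0}" by simp
  then show ?thesis using int_is_CI[of 1 0 n] assms(4) by simp
next
  case False
  then obtain l where l: "f ` {1..t} = {l..<l+t}" using assms(1,3) unfolding pint_def by fastforce
  have sub: "f ` {1..t} \<subseteq> {1..<n}" using assms(2,3) by auto
  have "l \<in> f ` {1..t}" "l + t - 1 \<in> f ` {1..t}" using l False by auto
  then have "l \<in> {1..<n}" "l + t - 1 \<in> {1..<n}" using sub by blast+
  then have "1 \<le> l" "l + t \<le> n + 1" using False by auto
  then show ?thesis using int_is_CI l by simp
qed

lemma arc_exists:
  fixes n :: nat
  assumes n: "n \<ge> 2" and J: "J \<subseteq> {1..n}" and p: "p \<in> {1..n}" "p \<in> J" "prv n p \<notin> J"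
  shows "\<exists>\<pi>. arc_perm n \<pi> \<and> \<pi> p = n \<and> cDes_perm n \<pi> = J"
proof -
  define l where "l = (if n \<in> J then 1 else n + 1 - p)"
  define bl where "bl = (if n \<in> J then p else 1)"
  obtain \<alpha> where \<alpha>: "pint \<alpha> (p-1)" "\<alpha> ` {1..p-1} = {l..<l+(p-1)}"
    "\<forall>i. 1 \<le> i \<longrightarrow> i < p-1 \<longrightarrow> (\<alpha> (Suc i) < \<alpha> i \<longleftrightarrow> i \<in> J)"
    using PI_exists[of "p-1" l J] by blast
  obtain \<gamma> where \<gamma>: "pint \<gamma> (n-p)" "\<gamma> ` {1..n-p} = {bl..<bl+(n-p)}"
    "\<forall>i. 1 \<le> i \<longrightarrow> i < n-p \<longrightarrow> (\<gamma> (Suc i) < \<gamma> i \<longleftrightarrow> i \<in> {i. n - i \<notin> J})"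
    using PI_exists[of "n-p" bl "{i. n - i \<notin> J}"] by blast
  define \<pi> where "\<pi> x = (if 1 \<le> x \<and> x < p then \<alpha> x else if x = p then n
      else if p < x \<and> x \<le> n then \<gamma> (n+1-x) else x)" for x
  define A where "A = {l..<l+(p-1)}"
  define B where "B = {bl..<bl+(n-p)}"
  have p1: "p = 1 \<Longrightarrow> n \<notin> J" using p(3) by (simp add: prv_def)
  have p2: "p \<ge> 2 \<Longrightarrow> p - 1 \<notin> J" using p(3) by (simp add: prv_def)
  have AB: "A \<union> B = {1..<n}" "A \<inter> B = {}" "A \<subseteq> {1..<n}" "B \<subseteq> {1..<n}"
  proof -
    have "A \<union> B = {1..<n} \<and> A \<inter> B = {}"
    proof (cases "n \<in> J")
      case True
      then have "A = {1..<p}" "B = {p..<n}" using p(1) by (auto simp: A_def B_def l_def bl_def)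
      then show ?thesis using p(1) by auto
    next
      case False
      then have "A = {n+1-p..<n}" "B = {1..<n+1-p}" using p(1) by (auto simp: A_def B_def l_def bl_def)
      then show ?thesis using p(1) by auto
    qed
    then show "A \<union> B = {1..<n}" "A \<inter> B = {}" "A \<subseteq> {1..<n}" "B \<subseteq> {1..<n}" by auto
  qed
  have img1: "\<pi> ` {1..j} = \<alpha> ` {1..j}" if "j < p" for j
    using that by (auto simp: \<pi>_def intro!: image_cong)
  have img2: "\<pi> ` {n+1-t..n} = \<gamma> ` {1..t}" if "t \<le> n - p" for t
  proof -
    have "\<pi> ` {n+1-t..n} = (\<lambda>i. \<pi> (n+1-i)) ` {1..t}" using rev_img[of t n \<pi>] that by simp
    also have "\<dots> = \<gamma> ` {1..t}"
    proof (rule image_cong[OF refl])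
      fix i assume "i \<in> {1..t}"
      then show "\<pi> (n+1-i) = \<gamma> i" using that p(1) by (auto simp: \<pi>_def)
    qed
    finally show ?thesis .
  qed
  have imA: "\<pi> ` {1..p-1} = A" using img1[of "p-1"] \<alpha>(2) p(1) by (simp add: A_def)
  have imB: "\<pi> ` {p+1..n} = B"
  proof -
    have "n + 1 - (n - p) = p + 1" using p(1) by auto
    then show ?thesis using img2[of "n-p"] \<gamma>(2) by (simp add: B_def)
  qed
  have split: "{1..n} = {1..p-1} \<union> {p} \<union> {p+1..n}" using p(1) by auto
  have imall: "\<pi> ` {1..n} = {1..n}"
  proof -
    have "\<pi> ` {1..n} = A \<union> {n} \<union> B" unfolding split image_Un imA imB by (simp add: \<pi>_def)
    also have "\<dots> = {1..n}" using AB(1) n by auto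
    finally show ?thesis .
  qed
  have inj: "inj_on \<pi> {1..n}" using imall by (simp add: inj_on_iff_eq_card)
  have bij: "bij_betw \<pi> {1..n} {1..n}" using inj imall by (simp add: bij_betw_def)
  have perm: "\<pi> permutes {1..n}" by (rule bij_imp_permutes[OF bij]) (use p(1) in \<open>auto simp: \<pi>_def\<close>)
  have arc: "arc_perm n \<pi>" unfolding arc_perm_def
  proof (intro conjI ballI perm)
    fix j assume j: "j \<in> {1..n}"
    show "cyc_interval n (\<pi> ` {1..j})"
    proof (cases "j < p")
      case True
      then have "\<pi> ` {1..j} = \<alpha> ` {1..j}" by (rule img1)
      moreover have "cyc_interval n (\<alpha> ` {1..j})"
        using pint_sub_int[OF \<alpha>(1), of n j] \<alpha>(2) AB(3) True n by (simp add: A_def)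
      ultimately show ?thesis by simp
    next
      case False
      have d: "{1..j} = {1..n} - {j+1..n}" using j by auto
      have "\<pi> ` {1..j} = \<pi> ` {1..n} - \<pi> ` {j+1..n}"
        unfolding d by (rule inj_on_image_set_diff[OF inj]) auto
      then have e: "\<pi> ` {1..j} = {1..n} - \<pi> ` {j+1..n}" using imall by simp
      have t: "n - j \<le> n - p" "n + 1 - (n - j) = j + 1" using False j by auto
      have "\<pi> ` {j+1..n} = \<gamma> ` {1..n-j}" using img2[OF t(1)] t(2) by simp
      moreover have "cyc_interval n (\<gamma> ` {1..n-j})"
        using pint_sub_int[OF \<gamma>(1), of n "n-j"] \<gamma>(2) AB(4) t n by (simp add: B_def)
      ultimately show ?thesis using e CI_compl[of n] n by simp
    qed
  qed
  have \<pi>p: "\<pi> p = n" by (simp add: \<pi>_def)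
  have inA: "\<pi> x \<in> A" if "x \<in> {1..p-1}" for x using imA that by blast
  have inB: "\<pi> x \<in> B" if "x \<in> {p+1..n}" for x using imB that by blast
  have cd: "cDes_perm n \<pi> = J"
  proof (rule set_eqI)
    fix i
    show "i \<in> cDes_perm n \<pi> \<longleftrightarrow> i \<in> J"
    proof (cases "i \<in> {1..n}")
      case False then show ?thesis using J by (auto simp: cDes_perm_def)
    next
      case True
      show ?thesis
      proof (cases "i < n")
        case lt: True
        then have ci: "i \<in> cDes_perm n \<pi> \<longleftrightarrow> \<pi> (Suc i) < \<pi> i" using True cdes_lt by auto
        consider "Suc i < p" | "Suc i = p" | "i = p" | "p < i" by linarith
        then show ?thesis
        proof cases
          case 1
          then have "\<pi> i = \<alpha> i" "\<pi> (Suc i) = \<alpha> (Suc i)" using True by (auto simp: \<pi>_def)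
          then show ?thesis using ci \<alpha>(3) 1 True by auto
        next
          case 2
          then have "\<pi> i \<in> A" using inA True by auto
          then have "\<pi> i < n" using AB(3) by auto
          moreover have "i \<notin> J" using p2 2 True by auto
          ultimately show ?thesis using ci 2 \<pi>p by auto
        next
          case 3
          then have "\<pi> (Suc i) \<in> B" using inB lt by auto
          then have "\<pi> (Suc i) < n" using AB(4) by auto
          then show ?thesis using ci 3 \<pi>p p(2) by auto
        next
          case 4
          define t where "t = n - i"
          have t: "1 \<le> t" "t < n - p" "n + 1 - t = Suc i" "n + 1 - Suc t = i" "n - t = i"
            using 4 lt by (auto simp: t_def)
          have g1: "\<pi> i = \<gamma> (Suc t)" using t 4 lt by (auto simp: \<pi>_def)
          have g2: "\<pi> (Suc i) = \<gamma> t" using t 4 lt by (auto simp: \<pi>_def)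
          have "\<pi> i \<noteq> \<pi> (Suc i)" using inj_onD[OF inj, of i "Suc i"] True lt by auto
          then show ?thesis using \<gamma>(3) t g1 g2 ci by auto
        qed
      next
        case False
        then have iN: "i = n" using True by auto
        have cn: "n \<in> cDes_perm n \<pi> \<longleftrightarrow> \<pi> 1 < \<pi> n" using cdes_n n by auto
        have "1 \<le> p" "p \<le> n" using p(1) by auto
        then consider "p = n" | "p = 1" | "2 \<le> p \<and> p < n" by linarith
        then show ?thesis
        proof cases
          case 1
          then have "\<pi> 1 \<in> A" using inA n by auto
          then have "\<pi> 1 < n" using AB(3) by auto
          then show ?thesis using cn iN 1 \<pi>p p(2) by auto
        next
          case 2
          then have "\<pi> n \<in> B" using inB n by auto
          then have "\<pi> n < n" using AB(4) by auto
          then show ?thesis using cn iN 2 \<pi>p p1 by auto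
        next
          case 3
          have a: "\<pi> 1 \<in> A" using inA 3 by auto
          have b: "\<pi> n \<in> B" using inB 3 by auto
          show ?thesis
          proof (cases "n \<in> J")
            case True
            then have "A = {1..<p}" "B = {p..<n}" by (auto simp: A_def B_def l_def bl_def)
            then show ?thesis using a b cn iN True by auto
          next
            case False
            then have "A = {n+1-p..<n}" "B = {1..<n+1-p}" using p(1) by (auto simp: A_def B_def l_def bl_def)
            then show ?thesis using a b cn iN False by auto
          qed
        qed
      qed
    qed
  qed
  show ?thesis using arc \<pi>p cd by blast
qed



lemma chain_unique:
  fixes f g :: "nat \<Rightarrow> nat"
  assumes f: "\<And>i j. i < j \<Longrightarrow> j < m \<Longrightarrow> f i < f j" and g: "\<And>i j. i < j \<Longrightarrow> j < m \<Longrightarrow> g i < g j"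
    and im: "f ` {..<m} = g ` {..<m}" and t: "t < m"
  shows "f t = g t"
proof -
  have sf: "sorted_wrt (<) (map f [0..<m])" unfolding sorted_wrt_iff_nth_less using f by auto
  have sg: "sorted_wrt (<) (map g [0..<m])" unfolding sorted_wrt_iff_nth_less using g by auto
  have "set (map f [0..<m]) = set (map g [0..<m])" using im by (simp add: atLeast0LessThan)
  then have "map f [0..<m] = map g [0..<m]" using strict_sorted_equal[OF sg sf] by simp
  then show ?thesis using t by (metis map_eq_conv atLeastLessThan_iff set_upt zero_le)
qed

definition nsucc :: "nat \<Rightarrow> nat \<Rightarrow> nat" where "nsucc n j = j mod n + 1"

definition V :: "nat \<Rightarrow> nat set \<Rightarrow> nat set" where "V n J = {p \<in> {1..n}. p \<in> J \<and> prv n p \<notin> J}"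

definition bJ :: "nat set \<Rightarrow> nat" where "bJ J = (if even (card J - 1) then card J - 1 else card J)"

lemma prv_in: "p \<in> {1..n} \<Longrightarrow> prv n p \<in> {1..n}" by (auto simp: prv_def)
lemma prv_ne: "n \<ge> 2 \<Longrightarrow> p \<in> {1..n} \<Longrightarrow> prv n p \<noteq> p" by (auto simp: prv_def)
lemma prv_eq: "p \<in> {1..n} \<Longrightarrow> i \<in> {1..<n} \<Longrightarrow> prv n p = i \<Longrightarrow> p = Suc i" by (auto simp: prv_def split: if_splits)
lemma nsucc_alt: "j \<in> {1..n} \<Longrightarrow> nsucc n j = (if j = n then 1 else Suc j)" by (auto simp: nsucc_def)
lemma nsucc_in: "j \<in> {1..n} \<Longrightarrow> nsucc n j \<in> {1..n}" by (auto simp: nsucc_alt)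
lemma prv_nsucc: "j \<in> {1..n} \<Longrightarrow> prv n (nsucc n j) = j" by (auto simp: nsucc_alt prv_def)
lemma nsucc_prv: "j \<in> {1..n} \<Longrightarrow> nsucc n (prv n j) = j" by (auto simp: nsucc_def prv_def)
lemma nsucc_inj: "inj_on (nsucc n) {1..n}" by (metis inj_onI prv_nsucc)
lemma prv_inj: "inj_on (prv n) {1..n}" by (metis inj_onI nsucc_prv)
lemma cyc_shift_eq: "cyc_shift n X = nsucc n ` X" by (auto simp: cyc_shift_def nsucc_def)

locale shp =
  fixes n b :: nat
  assumes n2: "n \<ge> 2" and bn: "b < n"
begin

definition "r = n - 1 - b"
definition "x0 = (0::nat, Suc r)"
definition "colc t = (Suc t, r)"
definition "rowc t = (Suc b, t)"
definition "Col = colc ` {..<b}"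
definition "Row = rowc ` {..<r}"
definition "D = insert x0 (Col \<union> Row)"
definition "Lsh = {(i,j). (i = 0 \<and> j \<le> Suc r) \<or> (1 \<le> i \<and> i \<le> b \<and> j \<le> r) \<or> (i = Suc b \<and> j < r)}"
definition "Msh = {(i,j). (i = 0 \<and> j \<le> r) \<or> (1 \<le> i \<and> i \<le> b \<and> j < r)}"

lemma nbr: "n = Suc (b + r)" using n2 bn by (simp add: r_def)

lemma D_char: "c \<in> D \<longleftrightarrow> c = x0 \<or> (\<exists>t<b. c = colc t) \<or> (\<exists>t<r. c = rowc t)"
  by (auto simp: D_def Col_def Row_def)

lemma D_eq: "Lsh - Msh = D"
proof (rule set_eqI)
  fix c :: "nat \<times> nat"
  obtain i j where c: "c = (i, j)" by force
  show "c \<in> Lsh - Msh \<longleftrightarrow> c \<in> D"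
    unfolding c D_char by (cases i) (auto simp: Lsh_def Msh_def x0_def colc_def rowc_def)
qed

lemma young_L: "young Lsh"
proof -
  have "Lsh \<subseteq> {0..Suc b} \<times> {0..Suc r}" by (auto simp: Lsh_def)
  then have "finite Lsh" by (rule finite_subset) simp
  then show ?thesis unfolding young_def Lsh_def by auto
qed

lemma young_M: "young Msh"
proof -
  have "Msh \<subseteq> {0..Suc b} \<times> {0..Suc r}" by (auto simp: Msh_def)
  then have "finite Msh" by (rule finite_subset) simp
  then show ?thesis unfolding young_def Msh_def by auto
qed

lemma skew: "skew_shape Lsh Msh"
  unfolding skew_shape_def using young_L young_M by (auto simp: Lsh_def Msh_def)

lemma fst_cells: "fst x0 = 0" "fst (colc t) = Suc t" "fst (rowc t) = Suc b"
  by (auto simp: x0_def colc_def rowc_def)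

lemma cells_distinct: "x0 \<noteq> colc t" "x0 \<noteq> rowc t'" "t < b \<Longrightarrow> colc t \<noteq> rowc t'"
  by (auto simp: x0_def colc_def rowc_def)

lemma x0_notin: "x0 \<notin> Col \<union> Row" by (auto simp: Col_def Row_def x0_def colc_def rowc_def)
lemma Col_Row_disj: "Col \<inter> Row = {}" by (auto simp: Col_def Row_def colc_def rowc_def)

lemma card_Col: "card Col = b" unfolding Col_def by (subst card_image) (auto simp: inj_on_def colc_def)
lemma card_Row: "card Row = r" unfolding Row_def by (subst card_image) (auto simp: inj_on_def rowc_def)
lemma fin: "finite Col" "finite Row" "finite D" by (auto simp: Col_def Row_def D_def)

lemma card_D: "card D = n"
proof -
  have "card D = Suc (card (Col \<union> Row))" unfolding D_def using x0_notin fin by simp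
  also have "card (Col \<union> Row) = b + r" using card_Un_disjoint[OF fin(1,2) Col_Row_disj] card_Col card_Row by simp
  finally show ?thesis using nbr by simp
qed

lemma not_ribbon: "\<not> connected_ribbon D"
proof
  assume "connected_ribbon D"
  then have cc: "connected_cells D" unfolding connected_ribbon_def by blast
  have "Col \<union> Row \<noteq> {}" using card_Col card_Row nbr n2 by auto
  then obtain d where d: "d \<in> Col \<union> Row" by blast
  then have dD: "d \<in> D" "d \<noteq> x0" using x0_notin by (auto simp: D_def)
  have x0D: "x0 \<in> D" by (simp add: D_def)
  let ?R = "\<lambda>x y. x \<in> D \<and> y \<in> D \<and> cell_adj x y"
  have "?R\<^sup>*\<^sup>* x0 d" using cc x0D dD unfolding connected_cells_def by blast
  moreover have "?R\<^sup>*\<^sup>* x0 y \<Longrightarrow> y = x0" for y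
  proof (induction rule: rtranclp_induct)
    case base then show ?case by simp
  next
    case (step y z)
    then have "z \<in> D" "cell_adj x0 z" by auto
    then show ?case unfolding D_char by (auto simp: cell_adj_def x0_def colc_def rowc_def)
  qed
  ultimately show False using dD by blast
qed

lemma syt_basic:
  assumes "syt n D T"
  shows "bij_betw T D {1..n}" "inj_on T D" "T ` D = {1..n}" "\<And>c. c \<in> D \<Longrightarrow> T c \<in> {1..n}"
    "\<And>c. c \<notin> D \<Longrightarrow> T c = 0"
    "\<And>i j. (i,j) \<in> D \<Longrightarrow> (i, Suc j) \<in> D \<Longrightarrow> T (i,j) < T (i, Suc j)"
    "\<And>i j. (i,j) \<in> D \<Longrightarrow> (Suc i, j) \<in> D \<Longrightarrow> T (i,j) < T (Suc i, j)"
proof -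
  show b: "bij_betw T D {1..n}" using assms by (simp add: syt_def)
  show "inj_on T D" using b by (rule bij_betw_imp_inj_on)
  show im: "T ` D = {1..n}" using b by (rule bij_betw_imp_surj_on)
  show "\<And>c. c \<in> D \<Longrightarrow> T c \<in> {1..n}" using im by blast
  show "\<And>c. c \<notin> D \<Longrightarrow> T c = 0" using assms unfolding syt_def by blast
  show "\<And>i j. (i,j) \<in> D \<Longrightarrow> (i, Suc j) \<in> D \<Longrightarrow> T (i,j) < T (i, Suc j)" using assms unfolding syt_def by blast
  show "\<And>i j. (i,j) \<in> D \<Longrightarrow> (Suc i, j) \<in> D \<Longrightarrow> T (i,j) < T (Suc i, j)" using assms unfolding syt_def by blast
qed

lemma colc_D: "t < b \<Longrightarrow> colc t \<in> D" by (auto simp: D_def Col_def)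
lemma rowc_D: "t < r \<Longrightarrow> rowc t \<in> D" by (auto simp: D_def Row_def)
lemma x0_D: "x0 \<in> D" by (simp add: D_def)

lemma col_mono:
  assumes T: "syt n D T" shows "t < t' \<Longrightarrow> t' < b \<Longrightarrow> T (colc t) < T (colc t')"
proof (induction t')
  case 0 then show ?case by simp
next
  case (Suc s)
  have adj: "T (colc s) < T (colc (Suc s))"
    using syt_basic(7)[OF T, of "Suc s" r] colc_D[of s] colc_D[of "Suc s"] Suc.prems by (simp add: colc_def)
  show ?case
  proof (cases "t = s")
    case True then show ?thesis using adj by simp
  next
    case False then show ?thesis using Suc adj by auto
  qed
qed

lemma row_mono:
  assumes T: "syt n D T" shows "t < t' \<Longrightarrow> t' < r \<Longrightarrow> T (rowc t) < T (rowc t')"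
proof (induction t')
  case 0 then show ?case by simp
next
  case (Suc s)
  have adj: "T (rowc s) < T (rowc (Suc s))"
    using syt_basic(6)[OF T, of "Suc b" s] rowc_D[of s] rowc_D[of "Suc s"] Suc.prems by (simp add: rowc_def)
  show ?case
  proof (cases "t = s")
    case True then show ?thesis using adj by simp
  next
    case False then show ?thesis using Suc adj by auto
  qed
qed

lemma Row_img:
  assumes T: "syt n D T" shows "T ` Row = {1..n} - insert (T x0) (T ` Col)"
proof -
  have d: "Row = D - insert x0 Col" using x0_notin Col_Row_disj by (auto simp: D_def)
  have "T ` Row = T ` D - T ` insert x0 Col"
    unfolding d by (rule inj_on_image_set_diff[OF syt_basic(2)[OF T]]) (auto simp: D_def)
  then show ?thesis using syt_basic(3)[OF T] by simp
qed

lemma syt_unique: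
  assumes T1: "syt n D T1" and T2: "syt n D T2" and x: "T1 x0 = T2 x0" and c: "T1 ` Col = T2 ` Col"
  shows "T1 = T2"
proof
  fix z
  have colv: "T1 (colc t) = T2 (colc t)" if "t < b" for t
  proof (rule chain_unique[where f="\<lambda>t. T1 (colc t)" and g="\<lambda>t. T2 (colc t)" and m=b])
    show "\<And>i j. i < j \<Longrightarrow> j < b \<Longrightarrow> T1 (colc i) < T1 (colc j)" by (rule col_mono[OF T1])
    show "\<And>i j. i < j \<Longrightarrow> j < b \<Longrightarrow> T2 (colc i) < T2 (colc j)" by (rule col_mono[OF T2])
    show "(\<lambda>t. T1 (colc t)) ` {..<b} = (\<lambda>t. T2 (colc t)) ` {..<b}" using c by (simp add: Col_def image_image)
    show "t < b" by (rule that)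
  qed
  have rowv: "T1 (rowc t) = T2 (rowc t)" if "t < r" for t
  proof (rule chain_unique[where f="\<lambda>t. T1 (rowc t)" and g="\<lambda>t. T2 (rowc t)" and m=r])
    show "\<And>i j. i < j \<Longrightarrow> j < r \<Longrightarrow> T1 (rowc i) < T1 (rowc j)" by (rule row_mono[OF T1])
    show "\<And>i j. i < j \<Longrightarrow> j < r \<Longrightarrow> T2 (rowc i) < T2 (rowc j)" by (rule row_mono[OF T2])
    have "T1 ` Row = T2 ` Row" using Row_img[OF T1] Row_img[OF T2] x c by simp
    then show "(\<lambda>t. T1 (rowc t)) ` {..<r} = (\<lambda>t. T2 (rowc t)) ` {..<r}" by (simp add: Row_def image_image)
    show "t < r" by (rule that)
  qed
  show "T1 z = T2 z"
  proof (cases "z \<in> D")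
    case True
    then consider "z = x0" | t where "t < b" "z = colc t" | t where "t < r" "z = rowc t" unfolding D_char by blast
    then show ?thesis by cases (use x colv rowv in auto)
  next
    case False then show ?thesis using syt_basic(5)[OF T1] syt_basic(5)[OF T2] by simp
  qed
qed

lemma nth_img: "(\<lambda>t. xs ! t) ` {..<length xs} = set xs"
  by (auto simp: set_conv_nth)

lemma syt_exists:
  assumes p: "p \<in> {1..n}" and C: "C \<subseteq> {1..n} - {p}" and cC: "card C = b"
  shows "\<exists>T. syt n D T \<and> T x0 = p \<and> T ` Col = C"
proof -
  define R where "R = {1..n} - insert p C"
  define sC where "sC = sorted_list_of_set C"
  define sR where "sR = sorted_list_of_set R"
  have finC: "finite C" using C by (rule finite_subset) simp
  have finR: "finite R" by (simp add: R_def)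
  have cR: "card R = r"
  proof -
    have sub: "insert p C \<subseteq> {1..n}" using p C by auto
    have "p \<notin> C" using C by auto
    then have ci: "card (insert p C) = Suc b" using cC finC by simp
    have "card ({1..n} - insert p C) = card {1..n} - card (insert p C)"
      by (rule card_Diff_subset) (use finC sub in auto)
    then show ?thesis unfolding R_def using ci nbr by simp
  qed
  have lC: "length sC = b" using cC by (simp add: sC_def)
  have lR: "length sR = r" using cR by (simp add: sR_def)
  have setC: "set sC = C" using finC by (simp add: sC_def)
  have setR: "set sR = R" using finR by (simp add: sR_def)
  have stC: "sorted_wrt (<) sC" by (simp add: sC_def)
  have stR: "sorted_wrt (<) sR" by (simp add: sR_def)
  define T where "T c = (if c = x0 then p else if 1 \<le> fst c \<and> fst c \<le> b \<and> snd c = r then sC ! (fst c - 1)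
      else if fst c = Suc b \<and> snd c < r then sR ! snd c else 0)" for c
  have Tx: "T x0 = p" by (simp add: T_def)
  have Tc: "T (colc t) = sC ! t" if "t < b" for t using that by (simp add: T_def colc_def x0_def)
  have Tr: "T (rowc t) = sR ! t" if "t < r" for t using that by (simp add: T_def rowc_def x0_def)
  have imC: "T ` Col = C"
  proof -
    have "T ` Col = (\<lambda>t. sC ! t) ` {..<b}" unfolding Col_def image_image using Tc by (auto intro!: image_cong)
    then show ?thesis using nth_img[of sC] lC setC by simp
  qed
  have imR: "T ` Row = R"
  proof -
    have "T ` Row = (\<lambda>t. sR ! t) ` {..<r}" unfolding Row_def image_image using Tr by (auto intro!: image_cong)
    then show ?thesis using nth_img[of sR] lR setR by simp
  qed
  have imD: "T ` D = {1..n}"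
  proof -
    have "T ` D = insert p (C \<union> R)" unfolding D_def using Tx imC imR by (simp add: image_Un)
    also have "\<dots> = {1..n}" using p C by (auto simp: R_def)
    finally show ?thesis .
  qed
  have inj: "inj_on T D" using imD card_D fin(3) by (simp add: inj_on_iff_eq_card)
  have out: "T c = 0" if "c \<notin> D" for c
  proof -
    obtain i j where c: "c = (i, j)" by force
    have "c \<noteq> x0" using that x0_D by auto
    moreover have "\<not> (1 \<le> i \<and> i \<le> b \<and> j = r)"
    proof
      assume h: "1 \<le> i \<and> i \<le> b \<and> j = r"
      then have "c = colc (i - 1)" "i - 1 < b" using c by (auto simp: colc_def)
      then show False using that colc_D by auto
    qed
    moreover have "\<not> (i = Suc b \<and> j < r)"
    proof
      assume h: "i = Suc b \<and> j < r"
      then have "c = rowc j" "j < r" using c by (auto simp: rowc_def)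
      then show False using that rowc_D by auto
    qed
    ultimately show ?thesis by (auto simp: T_def c)
  qed
  have rowinc: "T (i,j) < T (i, Suc j)" if h: "(i,j) \<in> D" "(i, Suc j) \<in> D" for i j
  proof -
    from h(1) consider "(i,j) = x0" | t where "t < b" "(i,j) = colc t" | t where "t < r" "(i,j) = rowc t"
      unfolding D_char by blast
    then show ?thesis
    proof cases
      case 1 then show ?thesis using h(2) unfolding D_char by (auto simp: x0_def colc_def rowc_def)
    next
      case 2 then show ?thesis using h(2) unfolding D_char by (auto simp: x0_def colc_def rowc_def)
    next
      case (3 t)
      then have ij: "i = Suc b" "j = t" by (auto simp: rowc_def)
      have "Suc t < r" using h(2) ij unfolding D_char by (auto simp: x0_def colc_def rowc_def)
      then have "sR ! t < sR ! Suc t" using sorted_wrt_nth_less[OF stR, of t "Suc t"] lR by simp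
      then show ?thesis using Tr[of t] Tr[of "Suc t"] ij \<open>Suc t < r\<close> by (simp add: rowc_def)
    qed
  qed
  have colinc: "T (i,j) < T (Suc i, j)" if h: "(i,j) \<in> D" "(Suc i, j) \<in> D" for i j
  proof -
    from h(1) consider "(i,j) = x0" | t where "t < b" "(i,j) = colc t" | t where "t < r" "(i,j) = rowc t"
      unfolding D_char by blast
    then show ?thesis
    proof cases
      case 1 then show ?thesis using h(2) unfolding D_char by (auto simp: x0_def colc_def rowc_def)
    next
      case (2 t)
      then have ij: "i = Suc t" "j = r" by (auto simp: colc_def)
      have "Suc t < b" using h(2) ij 2(1) unfolding D_char by (auto simp: x0_def colc_def rowc_def)
      then have "sC ! t < sC ! Suc t" using sorted_wrt_nth_less[OF stC, of t "Suc t"] lC by simp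
      then show ?thesis using Tc[of t] Tc[of "Suc t"] ij \<open>Suc t < b\<close> by (simp add: colc_def)
    next
      case 3 then show ?thesis using h(2) unfolding D_char by (auto simp: x0_def colc_def rowc_def)
    qed
  qed
  have "syt n D T" unfolding syt_def
    using inj imD out rowinc colinc by (auto simp: bij_betw_def)
  then show ?thesis using Tx imC by blast
qed

definition "cdsf T = (T ` Col \<union> {T x0}) - {prv n (T x0)}"

lemma syt_T1:
  assumes T: "syt n D T"
  shows "T x0 \<in> {1..n}" "T ` Col \<subseteq> {1..n} - {T x0}" "card (T ` Col) = b"
proof -
  show "T x0 \<in> {1..n}" using syt_basic(4)[OF T] x0_D by blast
  have "Col \<subseteq> D" by (auto simp: D_def)
  then have "inj_on T Col" using syt_basic(2)[OF T] by (rule inj_on_subset[rotated])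
  then show "card (T ` Col) = b" using card_Col by (simp add: card_image)
  have "T x0 \<notin> T ` Col" using inj_on_image_mem_iff[OF syt_basic(2)[OF T] x0_D \<open>Col \<subseteq> D\<close>] x0_notin by auto
  moreover have "T ` Col \<subseteq> {1..n}" using syt_basic(4)[OF T] \<open>Col \<subseteq> D\<close> by blast
  ultimately show "T ` Col \<subseteq> {1..n} - {T x0}" by blast
qed

lemma fst_D: "c \<in> D \<Longrightarrow> fst c \<le> Suc b" "c \<in> D \<Longrightarrow> fst c = 0 \<longleftrightarrow> c = x0"
  unfolding D_char by (auto simp: x0_def colc_def rowc_def)

lemma syt_des:
  assumes T: "syt n D T"
  shows "cdsf T \<inter> {1..n-1} = Des_syt n D T"
proof (rule set_eqI)
  fix i
  define p where "p = T x0"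
  have pn: "p \<in> {1..n}" using syt_T1(1)[OF T] by (simp add: p_def)
  have imD: "T ` D = {1..n}" by (rule syt_basic(3)[OF T])
  have injD: "inj_on T D" by (rule syt_basic(2)[OF T])
  have ColD: "Col \<subseteq> D" by (auto simp: D_def)
  show "i \<in> cdsf T \<inter> {1..n-1} \<longleftrightarrow> i \<in> Des_syt n D T"
  proof (cases "i \<in> {1..n-1}")
    case False then show ?thesis unfolding Des_syt_def by auto
  next
    case True
    then have i1: "i \<in> T ` D" "Suc i \<in> T ` D" "i \<in> {1..<n}" using imD n2 by auto
    define ci where "ci = inv_into D T i"
    define cj where "cj = inv_into D T (Suc i)"
    have ci: "ci \<in> D" "T ci = i" using i1 by (auto simp: ci_def inv_into_into f_inv_into_f)
    have cj: "cj \<in> D" "T cj = Suc i" using i1 by (auto simp: cj_def inv_into_into f_inv_into_f)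
    have des: "i \<in> Des_syt n D T \<longleftrightarrow> fst ci < fst cj" using True by (simp add: Des_syt_def ci_def cj_def)
    have cds: "i \<in> cdsf T \<longleftrightarrow> (i \<in> T ` Col \<or> i = p) \<and> i \<noteq> prv n p" by (auto simp: cdsf_def p_def)
    have inCol: "T c \<in> T ` Col \<longleftrightarrow> c \<in> Col" if "c \<in> D" for c
      using inj_on_image_mem_iff[OF injD that ColD] .
    have isx0: "T c = p \<longleftrightarrow> c = x0" if "c \<in> D" for c
      using inj_onD[OF injD _ that x0_D] by (auto simp: p_def)
    have nprv: "i \<noteq> prv n p" if "cj \<noteq> x0"
    proof
      assume "i = prv n p"
      then have "p = Suc i" using prv_eq[OF pn i1(3)] by simp
      then have "cj = x0" using isx0[OF cj(1)] cj(2) by simp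
      then show False using that by simp
    qed
    from ci(1) consider "ci = x0" | t where "t < b" "ci = colc t" | t where "t < r" "ci = rowc t"
      unfolding D_char by blast
    then show ?thesis
    proof cases
      case 1
      then have ip: "i = p" using ci(2) by (simp add: p_def)
      have "cj \<noteq> x0" using isx0[OF cj(1)] cj(2) ip by simp
      then have "fst cj \<noteq> 0" using fst_D(2)[OF cj(1)] by simp
      then have "fst ci < fst cj" using 1 fst_cells by simp
      moreover have "i \<in> cdsf T" using cds ip prv_ne[OF n2 pn] by simp
      ultimately show ?thesis using des True by simp
    next
      case (2 t)
      have iC: "i \<in> T ` Col" using 2 ci(2) by (auto simp: Col_def)
      from cj(1) consider "cj = x0" | t' where "t' < b" "cj = colc t'" | t' where "t' < r" "cj = rowc t'"
        unfolding D_char by blast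
      then show ?thesis
      proof cases
        case 1
        then have "p = Suc i" using cj(2) by (simp add: p_def)
        then have "prv n p = i" using i1(3) by (simp add: prv_def)
        then have "i \<notin> cdsf T" using cds by simp
        moreover have "\<not> fst ci < fst cj" using 1 2 fst_cells by simp
        ultimately show ?thesis using des by simp
      next
        case (2 t')
        have "t < t'"
        proof (rule ccontr)
          assume "\<not> t < t'"
          then have "t' < t \<or> t' = t" by auto
          then have "T (colc t') \<le> T (colc t)" using col_mono[OF T, of t' t] \<open>t < b\<close> by auto
          then show False using ci(2) cj(2) \<open>ci = colc t\<close> \<open>cj = colc t'\<close> by simp
        qed
        then have "fst ci < fst cj" using 2 \<open>ci = colc t\<close> fst_cells by simp
        moreover have "cj \<noteq> x0" using 2 by (auto simp: x0_def colc_def)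
        ultimately show ?thesis using des cds iC nprv True by simp
      next
        case (3 t')
        then have "fst ci < fst cj" using 2 fst_cells by simp
        moreover have "cj \<noteq> x0" using 3 by (auto simp: x0_def rowc_def)
        ultimately show ?thesis using des cds iC nprv True by simp
      qed
    next
      case (3 t)
      have "ci \<notin> Col" using 3 by (auto simp: Col_def colc_def rowc_def)
      then have "i \<notin> T ` Col" using inCol[OF ci(1)] ci(2) by simp
      moreover have "ci \<noteq> x0" using 3 by (auto simp: x0_def rowc_def)
      then have "i \<noteq> p" using isx0[OF ci(1)] ci(2) by simp
      ultimately have "i \<notin> cdsf T" using cds by simp
      moreover have "\<not> fst ci < fst cj" using fst_D(1)[OF cj(1)] 3 fst_cells by simp
      ultimately show ?thesis using des by simp
    qed
  qed
qed

definition "psi T = (SOME T'. syt n D T' \<and> T' x0 = nsucc n (T x0) \<and> T' ` Col = nsucc n ` (T ` Col))"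

lemma img_props:
  assumes p: "p \<in> {1..n}" and C: "C \<subseteq> {1..n} - {p}" and f: "inj_on f {1..n}" "\<And>x. x \<in> {1..n} \<Longrightarrow> f x \<in> {1..n}"
  shows "f p \<in> {1..n}" "f ` C \<subseteq> {1..n} - {f p}" "card (f ` C) = card C"
proof -
  show "f p \<in> {1..n}" using f(2) p by blast
  have Cs: "C \<subseteq> {1..n}" using C by blast
  have "f p \<notin> f ` C" using inj_on_image_mem_iff[OF f(1) p Cs] C by auto
  then show "f ` C \<subseteq> {1..n} - {f p}" using f(2) Cs by blast
  show "card (f ` C) = card C" using inj_on_subset[OF f(1) Cs] by (simp add: card_image)
qed

lemma psi_props:
  assumes T: "syt n D T"
  shows "syt n D (psi T)" "psi T x0 = nsucc n (T x0)" "psi T ` Col = nsucc n ` (T ` Col)"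
proof -
  have f: "inj_on (nsucc n) {1..n}" "\<And>x. x \<in> {1..n} \<Longrightarrow> nsucc n x \<in> {1..n}" using nsucc_inj nsucc_in by auto
  note ip = img_props[OF syt_T1(1,2)[OF T] f]
  have "\<exists>T'. syt n D T' \<and> T' x0 = nsucc n (T x0) \<and> T' ` Col = nsucc n ` (T ` Col)"
    using syt_exists[OF ip(1,2)] ip(3) syt_T1(3)[OF T] by simp
  then have "syt n D (psi T) \<and> psi T x0 = nsucc n (T x0) \<and> psi T ` Col = nsucc n ` (T ` Col)"
    unfolding psi_def by (rule someI_ex)
  then show "syt n D (psi T)" "psi T x0 = nsucc n (T x0)" "psi T ` Col = nsucc n ` (T ` Col)" by auto
qed

lemma psi_bij: "bij_betw psi {T. syt n D T} {T. syt n D T}"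
proof (rule bij_betwI')
  fix T1 T2 assume T1: "T1 \<in> {T. syt n D T}" and T2: "T2 \<in> {T. syt n D T}"
  then have T1': "syt n D T1" and T2': "syt n D T2" by auto
  show "psi T1 = psi T2 \<longleftrightarrow> T1 = T2"
  proof
    assume e: "psi T1 = psi T2"
    have "nsucc n (T1 x0) = nsucc n (T2 x0)" using psi_props(2)[OF T1'] psi_props(2)[OF T2'] e by simp
    then have x: "T1 x0 = T2 x0" using inj_onD[OF nsucc_inj _ syt_T1(1)[OF T1'] syt_T1(1)[OF T2']] by simp
    have eq: "nsucc n ` (T1 ` Col) = nsucc n ` (T2 ` Col)" using psi_props(3)[OF T1'] psi_props(3)[OF T2'] e by simp
    have h1: "T1 ` Col \<subseteq> {1..n}" using syt_T1(2)[OF T1'] by blast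
    have h2: "T2 ` Col \<subseteq> {1..n}" using syt_T1(2)[OF T2'] by blast
    have c: "T1 ` Col = T2 ` Col" using inj_on_image_eq_iff[OF nsucc_inj h1 h2] eq by simp
    show "T1 = T2" by (rule syt_unique[OF T1' T2' x c])
  qed simp
next
  fix T assume "T \<in> {T. syt n D T}"
  then show "psi T \<in> {T. syt n D T}" using psi_props(1) by auto
next
  fix T' assume "T' \<in> {T. syt n D T}"
  then have T': "syt n D T'" by simp
  have f: "inj_on (prv n) {1..n}" "\<And>x. x \<in> {1..n} \<Longrightarrow> prv n x \<in> {1..n}" using prv_inj prv_in by auto
  note ip = img_props[OF syt_T1(1,2)[OF T'] f]
  obtain T where T: "syt n D T" "T x0 = prv n (T' x0)" "T ` Col = prv n ` (T' ` Col)"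
    using syt_exists[OF ip(1,2)] ip(3) syt_T1(3)[OF T'] by auto
  have x: "psi T x0 = T' x0" using psi_props(2)[OF T(1)] T(2) nsucc_prv syt_T1(1)[OF T'] by simp
  have "psi T ` Col = nsucc n ` prv n ` (T' ` Col)" using psi_props(3)[OF T(1)] T(3) by simp
  also have "\<dots> = T' ` Col"
  proof -
    have "\<forall>y \<in> T' ` Col. nsucc n (prv n y) = y" using syt_T1(2)[OF T'] nsucc_prv by blast
    then show ?thesis by (simp add: image_image)
  qed
  finally have "psi T = T'" using syt_unique[OF psi_props(1)[OF T(1)] T' x] by simp
  then show "\<exists>x\<in>{T. syt n D T}. T' = psi x" using T(1) by auto
qed

lemma cds_psi:
  assumes T: "syt n D T"
  shows "cdsf (psi T) = cyc_shift n (cdsf T)"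
proof -
  define p where "p = T x0"
  define C where "C = T ` Col"
  have pn: "p \<in> {1..n}" using syt_T1(1)[OF T] by (simp add: p_def)
  have Cn: "C \<subseteq> {1..n}" using syt_T1(2)[OF T] unfolding C_def by blast
  have "cdsf (psi T) = (nsucc n ` C \<union> {nsucc n p}) - {prv n (nsucc n p)}"
    using psi_props(2,3)[OF T] by (simp add: cdsf_def p_def C_def)
  also have "\<dots> = nsucc n ` (C \<union> {p}) - {nsucc n (prv n p)}" using prv_nsucc[OF pn] nsucc_prv[OF pn] by simp
  also have "\<dots> = nsucc n ` ((C \<union> {p}) - {prv n p})"
  proof -
    have s1: "(C \<union> {p}) - {prv n p} \<subseteq> {1..n}" using Cn pn by blast
    have s2: "{prv n p} \<subseteq> {1..n}" using prv_in[OF pn] by blast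
    show ?thesis using inj_on_image_set_diff[OF nsucc_inj s1 s2] by simp
  qed
  finally show ?thesis by (simp add: cyc_shift_eq cdsf_def p_def C_def)
qed

lemma cyc_ext: "cyc_desc_ext n D cdsf psi"
  unfolding cyc_desc_ext_def
proof (intro conjI allI impI psi_bij)
  fix T assume T: "syt n D T"
  define p where "p = T x0"
  have pn: "p \<in> {1..n}" using syt_T1(1)[OF T] by (simp add: p_def)
  have Cn: "T ` Col \<subseteq> {1..n}" using syt_T1(2)[OF T] by blast
  show "cdsf T \<subseteq> {1..n}" using pn Cn by (auto simp: cdsf_def p_def)
  show "cdsf T \<inter> {1..n - 1} = Des_syt n D T" by (rule syt_des[OF T])
  show "cdsf (psi T) = cyc_shift n (cdsf T)" by (rule cds_psi[OF T])
  have "p \<in> cdsf T" using prv_ne[OF n2 pn] by (simp add: cdsf_def p_def)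
  then show "cdsf T \<noteq> {}" by auto
  have "prv n p \<notin> cdsf T" by (simp add: cdsf_def p_def)
  then show "cdsf T \<noteq> {1..n}" using prv_in[OF pn] by auto
qed

lemma cdsf_alt: "cdsf T = insert (T x0) (T ` Col) - {prv n (T x0)}" by (simp add: cdsf_def)

lemma syt_bJ:
  assumes T: "syt n D T" and ev: "even b"
  shows "b = bJ (cdsf T)"
proof -
  define p where "p = T x0"
  define C where "C = T ` Col"
  define q where "q = prv n p"
  have pn: "p \<in> {1..n}" using syt_T1(1)[OF T] by (simp add: p_def)
  have Cn: "C \<subseteq> {1..n} - {p}" using syt_T1(2)[OF T] by (simp add: p_def C_def)
  have cC: "card C = b" using syt_T1(3)[OF T] by (simp add: C_def)
  have finC: "finite C" using Cn by (rule finite_subset) simp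
  have pC: "p \<notin> C" using Cn by blast
  have qp: "q \<noteq> p" using prv_ne[OF n2 pn] by (simp add: q_def)
  have J: "cdsf T = insert p C - {q}" by (simp add: cdsf_alt p_def C_def q_def)
  have ci: "card (insert p C) = Suc b" using finC pC cC by simp
  show ?thesis
  proof (cases "q \<in> C")
    case True
    then have "card (insert p C - {q}) = b" using ci finC by (simp add: card_Diff_singleton)
    moreover have "b \<noteq> 0" using True cC finC card_gt_0_iff by blast
    then have "odd (b - 1)" using ev by simp
    ultimately show ?thesis using J by (simp add: bJ_def)
  next
    case False
    then have "insert p C - {q} = insert p C" using qp by auto
    then have "card (insert p C - {q}) = Suc b" using ci by simp
    then show ?thesis using J ev by (simp add: bJ_def)
  qed
qed

lemma count_b:
  assumes ev: "even b" and J: "J \<subseteq> {1..n}"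
  shows "card {T. syt n D T \<and> cdsf T = J} = (if b = bJ J then card (V n J) else 0)"
proof (cases "b = bJ J")
  case False
  then have "{T. syt n D T \<and> cdsf T = J} = {}" using syt_bJ ev by auto
  then show ?thesis using False by (simp only: card.empty if_False)
next
  case True
  have finJ: "finite J" using J by (rule finite_subset) simp
  have "bij_betw (\<lambda>T. T x0) {T. syt n D T \<and> cdsf T = J} (V n J)"
  proof (rule bij_betwI')
    fix T assume "T \<in> {T. syt n D T \<and> cdsf T = J}"
    then have T: "syt n D T" "cdsf T = J" by auto
    have pn: "T x0 \<in> {1..n}" by (rule syt_T1(1)[OF T(1)])
    have "T x0 \<in> cdsf T" using prv_ne[OF n2 pn] by (simp add: cdsf_alt)
    moreover have "prv n (T x0) \<notin> cdsf T" by (simp add: cdsf_alt)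
    ultimately show "T x0 \<in> V n J" using pn T(2) by (simp add: V_def)
  next
    fix T1 T2 assume "T1 \<in> {T. syt n D T \<and> cdsf T = J}" "T2 \<in> {T. syt n D T \<and> cdsf T = J}"
    then have T1: "syt n D T1" "cdsf T1 = J" and T2: "syt n D T2" "cdsf T2 = J" by auto
    show "T1 x0 = T2 x0 \<longleftrightarrow> T1 = T2"
    proof
      assume x: "T1 x0 = T2 x0"
      define p where "p = T1 x0"
      define q where "q = prv n p"
      define C1 where "C1 = T1 ` Col"
      define C2 where "C2 = T2 ` Col"
      have p1: "p \<notin> C1" using syt_T1(2)[OF T1(1)] by (auto simp: p_def C1_def)
      have p2: "p \<notin> C2" using syt_T1(2)[OF T2(1)] x by (auto simp: p_def C2_def)
      have c1: "card C1 = b" "finite C1" using syt_T1(3)[OF T1(1)] card_Col fin(1) by (auto simp: C1_def)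
      have c2: "card C2 = b" "finite C2" using syt_T1(3)[OF T2(1)] card_Col fin(1) by (auto simp: C2_def)
      have e1: "insert p C1 - {q} = J" using T1(2) by (simp add: cdsf_alt p_def q_def C1_def)
      have e2: "insert p C2 - {q} = J" using T2(2) x by (simp add: cdsf_alt p_def q_def C2_def)
      have d1: "C1 - {q} = J - {p}" using e1 p1 by auto
      have d2: "C2 - {q} = J - {p}" using e2 p2 by auto
      have mem: "q \<in> C1 \<longleftrightarrow> q \<in> C2"
      proof (rule ccontr)
        assume h: "\<not> (q \<in> C1 \<longleftrightarrow> q \<in> C2)"
        have cd1: "card C1 = (if q \<in> C1 then Suc (card (J - {p})) else card (J - {p}))"
          using d1 c1(2) by (metis card_Diff1_le card_Diff_singleton_if Diff_empty Diff_insert0 card.remove)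
        have cd2: "card C2 = (if q \<in> C2 then Suc (card (J - {p})) else card (J - {p}))"
          using d2 c2(2) by (metis card_Diff1_le card_Diff_singleton_if Diff_empty Diff_insert0 card.remove)
        show False using h cd1 cd2 c1(1) c2(1) by (auto split: if_splits)
      qed
      have "C1 = C2"
      proof
        show "C1 \<subseteq> C2" using d1 d2 mem by blast
        show "C2 \<subseteq> C1" using d1 d2 mem by blast
      qed
      then show "T1 = T2" using syt_unique[OF T1(1) T2(1) x] by (simp add: C1_def C2_def)
    qed simp
  next
    fix p assume pV: "p \<in> V n J"
    then have pn: "p \<in> {1..n}" and pJ: "p \<in> J" and qJ: "prv n p \<notin> J" by (auto simp: V_def)
    define q where "q = prv n p"
    have qn: "q \<in> {1..n}" "q \<noteq> p" using prv_in[OF pn] prv_ne[OF n2 pn] by (auto simp: q_def)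
    define C where "C = (if even (card J - 1) then J - {p} else insert q (J - {p}))"
    have Cs: "C \<subseteq> {1..n} - {p}" using J qn by (auto simp: C_def)
    have cJ: "card (J - {p}) = card J - 1" using pJ finJ by simp
    have cC: "card C = b"
    proof (cases "even (card J - 1)")
      case True then show ?thesis using cJ \<open>b = bJ J\<close> by (simp add: C_def bJ_def)
    next
      case False
      have "q \<notin> J - {p}" using qJ by (simp add: q_def)
      then have "card C = Suc (card J - 1)" using False cJ finJ by (simp add: C_def)
      moreover have "card J \<ge> 1" using pJ finJ by (metis One_nat_def Suc_leI card_gt_0_iff empty_iff)
      ultimately show ?thesis using False \<open>b = bJ J\<close> by (simp add: bJ_def)
    qed
    obtain T where T: "syt n D T" "T x0 = p" "T ` Col = C" using syt_exists[OF pn Cs cC] by blast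
    have "cdsf T = insert p C - {q}" using T by (simp add: cdsf_alt q_def)
    also have "\<dots> = J" using pJ qJ qn by (auto simp: C_def q_def)
    finally show "\<exists>T\<in>{T. syt n D T \<and> cdsf T = J}. p = T x0" using T by auto
  qed
  then show ?thesis using True by (simp add: bij_betw_same_card)
qed

end


lemma arc_count:
  fixes n :: nat
  assumes n: "n \<ge> 2" and J: "J \<subseteq> {1..n}"
  shows "card {\<pi> \<in> arc_perms n. cDes_perm n \<pi> = J} = card (V n J)"
proof -
  have "bij_betw (\<lambda>\<pi>. inv \<pi> n) {\<pi> \<in> arc_perms n. cDes_perm n \<pi> = J} (V n J)"
  proof (rule bij_betwI')
    fix \<pi> assume "\<pi> \<in> {\<pi> \<in> arc_perms n. cDes_perm n \<pi> = J}"
    then have arc: "arc_perm n \<pi>" and cd: "cDes_perm n \<pi> = J" by (auto simp: arc_perms_def)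
    have perm: "\<pi> permutes {1..n}" using arc unfolding arc_perm_def by blast
    note pf = perm_facts[OF perm]
    define p where "p = inv \<pi> n"
    have pp: "\<pi> p = n" using permutes_inverses(1)[OF perm] by (simp add: p_def)
    have nn: "n \<in> {1..n}" using n by auto
    have pn: "p \<in> {1..n}"
    proof (rule ccontr)
      assume "p \<notin> {1..n}"
      then have "\<pi> p = p" using pf(5) by blast
      then show False using pp \<open>p \<notin> {1..n}\<close> nn by simp
    qed
    have ne: "\<pi> x < n" if "x \<in> {1..n}" "x \<noteq> p" for x
    proof -
      have "\<pi> x \<noteq> \<pi> p" using inj_onD[OF pf(2) _ that(1) pn] that(2) by auto
      then show ?thesis using pf(4)[OF that(1)] pp by auto
    qed
    have "p \<in> cDes_perm n \<pi>"
    proof (cases "p = n")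
      case True
      have "\<pi> 1 < n" using ne[of 1] n True by auto
      then show ?thesis using True pp cdes_n[of n \<pi>] n by auto
    next
      case False
      then have "p \<in> {1..<n}" using pn by auto
      moreover have "\<pi> (Suc p) < n" using ne[of "Suc p"] False pn by auto
      ultimately show ?thesis using cdes_lt pp by auto
    qed
    moreover have "prv n p \<notin> cDes_perm n \<pi>"
    proof (cases "p = 1")
      case True
      then have "prv n p = n" by (simp add: prv_def)
      moreover have "\<pi> n \<le> n" using pf(4)[OF nn] by auto
      ultimately show ?thesis using cdes_n[of n \<pi>] n True pp by auto
    next
      case False
      then have q: "prv n p = p - 1" "p - 1 \<in> {1..<n}" "Suc (p - 1) = p" using pn by (auto simp: prv_def)
      have "\<pi> (p - 1) \<le> n" using pf(4)[of "p-1"] q(2) by auto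
      then show ?thesis using cdes_lt[OF q(2), of \<pi>] q(1,3) pp by auto
    qed
    ultimately show "inv \<pi> n \<in> V n J" using pn cd by (simp add: V_def p_def)
  next
    fix \<pi>1 \<pi>2 assume h1: "\<pi>1 \<in> {\<pi> \<in> arc_perms n. cDes_perm n \<pi> = J}" and h2: "\<pi>2 \<in> {\<pi> \<in> arc_perms n. cDes_perm n \<pi> = J}"
    then have a1: "arc_perm n \<pi>1" "cDes_perm n \<pi>1 = J" and a2: "arc_perm n \<pi>2" "cDes_perm n \<pi>2 = J"
      by (auto simp: arc_perms_def)
    have perm1: "\<pi>1 permutes {1..n}" using a1 unfolding arc_perm_def by blast
    have perm2: "\<pi>2 permutes {1..n}" using a2 unfolding arc_perm_def by blast
    show "inv \<pi>1 n = inv \<pi>2 n \<longleftrightarrow> \<pi>1 = \<pi>2"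
    proof
      assume e: "inv \<pi>1 n = inv \<pi>2 n"
      define p where "p = inv \<pi>1 n"
      have pp1: "\<pi>1 p = n" using permutes_inverses(1)[OF perm1] by (simp add: p_def)
      have pp2: "\<pi>2 p = n" using permutes_inverses(1)[OF perm2] e by (simp add: p_def)
      have pn: "p \<in> {1..n}"
      proof (rule ccontr)
        assume "p \<notin> {1..n}"
        then have "\<pi>1 p = p" using perm_facts(5)[OF perm1] by blast
        then show False using pp1 \<open>p \<notin> {1..n}\<close> n by simp
      qed
      show "\<pi>1 = \<pi>2" using arc_unique[OF n a1(1) a2(1) pn pp1 pp2] a1(2) a2(2) by simp
    qed simp
  next
    fix p assume "p \<in> V n J"
    then have pn: "p \<in> {1..n}" "p \<in> J" "prv n p \<notin> J" by (auto simp: V_def)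
    obtain \<pi> where \<pi>: "arc_perm n \<pi>" "\<pi> p = n" "cDes_perm n \<pi> = J" using arc_exists[OF n J pn] by blast
    have perm: "\<pi> permutes {1..n}" using \<pi>(1) unfolding arc_perm_def by blast
    have "inv \<pi> n = p" using permutes_inverses(2)[OF perm, of p] \<pi>(2) by simp
    then show "\<exists>\<pi>\<in>{\<pi> \<in> arc_perms n. cDes_perm n \<pi> = J}. p = inv \<pi> n" using \<pi> by (auto simp: arc_perms_def)
  qed
  then show ?thesis by (rule bij_betw_same_card)
qed

lemma shp_k: "n \<ge> 2 \<Longrightarrow> k < (n + 1) div 2 \<Longrightarrow> shp n (2 * k)"
  by unfold_locales auto

lemma bJ_facts:
  fixes n :: nat
  assumes n: "n \<ge> 2" and J: "J \<subseteq> {1..n}" and V: "V n J \<noteq> {}"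
  shows "even (bJ J)" "bJ J < n"
proof -
  obtain p where p: "p \<in> {1..n}" "p \<in> J" "prv n p \<notin> J" using V by (auto simp: V_def)
  have finJ: "finite J" using J by (rule finite_subset) simp
  have c1: "card J \<ge> 1" using p(2) finJ by (metis One_nat_def Suc_leI card_gt_0_iff empty_iff)
  have "J \<subset> {1..n}" using J p(3) prv_in[OF p(1)] by blast
  then have c2: "card J < n" using psubset_card_mono[of "{1..n}" J] by simp
  show "even (bJ J)" using c1 by (auto simp: bJ_def)
  show "bJ J < n" using c2 by (auto simp: bJ_def)
qed

lemma sum_count:
  fixes n :: nat
  assumes n: "n \<ge> 2" and J: "J \<subseteq> {1..n}"
  shows "(\<Sum>k<(n+1) div 2. card {T. syt n (shp.D n (2*k)) T \<and> shp.cdsf n (2*k) T = J}) = card (V n J)"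
proof -
  have t: "card {T. syt n (shp.D n (2*k)) T \<and> shp.cdsf n (2*k) T = J} = (if 2 * k = bJ J then card (V n J) else 0)"
    if "k \<in> {..<(n+1) div 2}" for k
    using shp.count_b[OF shp_k[OF n] _ J] that by simp
  have "(\<Sum>k<(n+1) div 2. card {T. syt n (shp.D n (2*k)) T \<and> shp.cdsf n (2*k) T = J})
      = (\<Sum>k<(n+1) div 2. (if 2 * k = bJ J then card (V n J) else 0))" using t by (rule sum.cong[OF refl])
  also have "\<dots> = card (V n J)"
  proof (cases "V n J = {}")
    case True then show ?thesis by simp
  next
    case False
    note bf = bJ_facts[OF n J False]
    have eq: "(2 * k = bJ J) = (k = bJ J div 2)" for k using bf(1) by auto
    have "bJ J div 2 < (n + 1) div 2" using bf by auto
    then show ?thesis unfolding eq by simp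
  qed
  finally show ?thesis .
qed

theorem corollary6p3:
  fixes n :: nat
  assumes "n \<ge> 2"
  shows "cyclic_schur_positive n (arc_perms n)"
proof -
  note n = assms
  define K where "K = (n + 1) div 2"
  define shapes where "shapes = map (\<lambda>k. (shp.Lsh n (2*k), shp.Msh n (2*k))) [0..<K]"
  define cds where "cds = (\<lambda>k. shp.cdsf n (2*k))"
  have len: "length shapes = K" by (simp add: shapes_def)
  have nth: "shapes ! k = (shp.Lsh n (2*k), shp.Msh n (2*k))" if "k < K" for k using that by (simp add: shapes_def)
  show ?thesis unfolding cyclic_schur_positive_def
  proof (rule exI[of _ shapes], rule exI[of _ cds], intro conjI allI impI)
    fix k assume k: "k < length shapes"
    then have kK: "k < K" using len by simp
    interpret S: shp n "2*k" using shp_k[OF n] kK by (simp add: K_def)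
    have DD: "fst (shapes ! k) - snd (shapes ! k) = S.D" using nth[OF kK] S.D_eq by simp
    show "skew_shape (fst (shapes ! k)) (snd (shapes ! k))" using nth[OF kK] S.skew by simp
    show "card (fst (shapes ! k) - snd (shapes ! k)) = n" using DD S.card_D by simp
    show "\<not> connected_ribbon (fst (shapes ! k) - snd (shapes ! k))" using DD S.not_ribbon by simp
    show "\<exists>\<psi>. cyc_desc_ext n (fst (shapes ! k) - snd (shapes ! k)) (cds k) \<psi>"
      using DD S.cyc_ext by (auto simp: cds_def)
  next
    fix J
    show "card {\<pi> \<in> arc_perms n. cDes_perm n \<pi> = J} =
      (\<Sum>k<length shapes. card {T. syt n (fst (shapes ! k) - snd (shapes ! k)) T \<and> cds k T = J})"
    proof -
      have "(\<Sum>k<length shapes. card {T. syt n (fst (shapes ! k) - snd (shapes ! k)) T \<and> cds k T = J})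
          = (\<Sum>k<K. card {T. syt n (shp.D n (2*k)) T \<and> shp.cdsf n (2*k) T = J})"
        unfolding len
      proof (rule sum.cong[OF refl])
        fix k assume "k \<in> {..<K}"
        then have kK: "k < K" by simp
        interpret S: shp n "2*k" using shp_k[OF n] kK by (simp add: K_def)
        show "card {T. syt n (fst (shapes ! k) - snd (shapes ! k)) T \<and> cds k T = J}
          = card {T. syt n (shp.D n (2*k)) T \<and> shp.cdsf n (2*k) T = J}"
          using nth[OF kK] S.D_eq by (simp add: cds_def)
      qed
      moreover have "card {\<pi> \<in> arc_perms n. cDes_perm n \<pi> = J} = (\<Sum>k<K. card {T. syt n (shp.D n (2*k)) T \<and> shp.cdsf n (2*k) T = J})"
      proof (cases "J \<subseteq> {1..n}")
        case True
        then show ?thesis using arc_count[OF n True] sum_count[OF n True] by (simp add: K_def)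
      next
        case False
        have e1: "{\<pi> \<in> arc_perms n. cDes_perm n \<pi> = J} = {}" using False by (auto simp: cDes_perm_def)
        have e2: "{T. syt n (shp.D n (2*k)) T \<and> shp.cdsf n (2*k) T = J} = {}" if "k \<in> {..<K}" for k
        proof -
          interpret S: shp n "2*k" using shp_k[OF n] that by (simp add: K_def)
          show ?thesis using S.cyc_ext False unfolding cyc_desc_ext_def by blast
        qed
        have z: "card {T. syt n (shp.D n (2*k)) T \<and> shp.cdsf n (2*k) T = J} = 0" if "k \<in> {..<K}" for k
          using e2[OF that] by (simp only: card.empty)
        have "(\<Sum>k<K. card {T. syt n (shp.D n (2*k)) T \<and> shp.cdsf n (2*k) T = J}) = 0"
          by (rule sum.neutral) (use z in blast)
        then show ?thesis using e1 by (metis card.empty)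
      qed
      ultimately show ?thesis by simp
    qed
  qed
qed

end
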